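(* Let $Q$ be a quiver without oriented cycles and $\mathbf{1}$ the dimension vector with $\mathbf{1}(x)=1$ for all $x\in Q_0$. For every $W\in\operatorname{Rep}(Q,\mathbf{1})$, the orbit closure $\overline{\operatorname{GL}(\mathbf{1})W}\subseteq\operatorname{Rep}(Q,\mathbf{1})$ is a normal variety.
   Context: Work over an algebraically closed field $k$ of characteristic zero. $\operatorname{Rep}(Q,\mathbf{1})=k^{Q_1}$ with the torus $\operatorname{GL}(\mathbf{1})=(k^* )^{Q_0}$ acting by $(g\cdot W)(a)=g(ha)W(a)g(ta)^{-1}$; $\overline{\operatorname{GL}(\mathbf{1})W}$ is the Zariski closure of the orbit of $W$. *)

theory Defs
  imports Main "HOL-Computational_Algebra.Polynomial"
begin

definition alg_closed :: "'k::field itself \<Rightarrow> bool" where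
  "alg_closed _ \<longleftrightarrow> (\<forall>p :: 'k poly. degree p > 0 \<longrightarrow> (\<exists>x. poly p x = 0))"

inductive_set polyfun :: "(('i \<Rightarrow> 'k::field) \<Rightarrow> 'k) set" where
  const: "(\<lambda>_. c) \<in> polyfun"
| coord: "(\<lambda>x. x i) \<in> polyfun"
| add: "f \<in> polyfun \<Longrightarrow> g \<in> polyfun \<Longrightarrow> (\<lambda>x. f x + g x) \<in> polyfun"
| mult: "f \<in> polyfun \<Longrightarrow> g \<in> polyfun \<Longrightarrow> (\<lambda>x. f x * g x) \<in> polyfun"

definition zariski_closure :: "(('i \<Rightarrow> 'k::field)) set \<Rightarrow> ('i \<Rightarrow> 'k) set" where
  "zariski_closure S = {x. \<forall>p\<in>polyfun. (\<forall>s\<in>S. p s = 0) \<longrightarrow> p x = 0}"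

text \<open>Irreducibility of a closed set V: its coordinate ring (polynomial functions restricted to V)
  is an integral domain, i.e. V nonempty and pq = 0 on V forces p = 0 or q = 0 on V.\<close>
definition irreducible_variety :: "('i \<Rightarrow> 'k::field) set \<Rightarrow> bool" where
  "irreducible_variety V \<longleftrightarrow> V \<noteq> {} \<and>
     (\<forall>p\<in>polyfun. \<forall>q\<in>polyfun. (\<forall>x\<in>V. p x * q x = 0) \<longrightarrow> (\<forall>x\<in>V. p x = 0) \<or> (\<forall>x\<in>V. q x = 0))"

text \<open>Normality of an affine variety V: V is irreducible and its coordinate ring k[V]
  (= polynomial functions restricted to V) is integrally closed in its fraction field.
  An element f/g of the fraction field (g not identically zero on V) is integral over k[V]
  iff there are n>0 and c_0,...,c_{n-1} in k[V] with (f/g)^n + sum c_j (f/g)^j = 0,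
  i.e. (clearing denominators) f^n + sum c_j f^j g^(n-j) = 0 on V; it lies in k[V] iff
  f = r g on V for some r in k[V].\<close>
definition normal_variety :: "('i \<Rightarrow> 'k::field) set \<Rightarrow> bool" where
  "normal_variety V \<longleftrightarrow> irreducible_variety V \<and>
     (\<forall>f\<in>polyfun. \<forall>g\<in>polyfun. (\<exists>x\<in>V. g x \<noteq> 0) \<longrightarrow>
        (\<forall>n>0. \<forall>c. (\<forall>j<n. c j \<in> polyfun) \<longrightarrow>
            (\<forall>x\<in>V. f x ^ n + (\<Sum>j<n. c j x * f x ^ j * g x ^ (n - j)) = 0) \<longrightarrow>
            (\<exists>r\<in>polyfun. \<forall>x\<in>V. f x = r x * g x)))"

text \<open>Quiver with vertex type 'v and arrow type 'a, head map hd and tail map tl.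
  An oriented cycle is a nonempty list of arrows a_0,...,a_{m-1} with t(a_{i+1}) = h(a_i)
  and t(a_0) = h(a_{m-1}).\<close>
definition has_oriented_cycle :: "('a \<Rightarrow> 'v) \<Rightarrow> ('a \<Rightarrow> 'v) \<Rightarrow> bool" where
  "has_oriented_cycle h t \<longleftrightarrow> (\<exists>as. as \<noteq> [] \<and>
      (\<forall>i. Suc i < length as \<longrightarrow> t (as ! Suc i) = h (as ! i)) \<and>
      t (hd as) = h (last as))"

text \<open>Action of the torus GL(1) = (k^*)^{Q_0} on Rep(Q,1) = k^{Q_1}.\<close>
definition torus_act :: "('a \<Rightarrow> 'v) \<Rightarrow> ('a \<Rightarrow> 'v) \<Rightarrow> ('v \<Rightarrow> 'k::field) \<Rightarrow> ('a \<Rightarrow> 'k) \<Rightarrow> ('a \<Rightarrow> 'k)" where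
  "torus_act h t g W = (\<lambda>a. g (h a) * W a * inverse (g (t a)))"

definition torus_orbit :: "('a \<Rightarrow> 'v) \<Rightarrow> ('a \<Rightarrow> 'v) \<Rightarrow> ('a \<Rightarrow> 'k::field) \<Rightarrow> ('a \<Rightarrow> 'k) set" where
  "torus_orbit h t W = {torus_act h t g W | g. \<forall>v. g v \<noteq> 0}"

end

theory Submission
  imports Defs "HOL-Library.Function_Algebras"
begin


lemma polyfun_const[intro]: "(\<lambda>_. c) \<in> polyfun" by (rule polyfun.const)
lemma polyfun_coord[intro]: "(\<lambda>x. x i) \<in> polyfun" by (rule polyfun.coord)
lemma polyfun_add[intro]: "f \<in> polyfun \<Longrightarrow> g \<in> polyfun \<Longrightarrow> (\<lambda>x. f x + g x) \<in> polyfun"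
  by (rule polyfun.add)
lemma polyfun_mult[intro]: "f \<in> polyfun \<Longrightarrow> g \<in> polyfun \<Longrightarrow> (\<lambda>x. f x * g x) \<in> polyfun"
  by (rule polyfun.mult)
lemma polyfun_uminus[intro]: "f \<in> polyfun \<Longrightarrow> (\<lambda>x. - f x) \<in> polyfun"
proof -
  assume "f \<in> polyfun"
  then have "(\<lambda>x. (-1) * f x) \<in> polyfun" by (intro polyfun_mult polyfun_const)
  then show ?thesis by simp
qed
lemma polyfun_diff[intro]: "f \<in> polyfun \<Longrightarrow> g \<in> polyfun \<Longrightarrow> (\<lambda>x. f x - g x) \<in> polyfun"
  using polyfun_add[of f "\<lambda>x. - g x"] polyfun_uminus[of g] by simp
lemma polyfun_sum[intro]: "(\<And>j. j \<in> A \<Longrightarrow> f j \<in> polyfun) \<Longrightarrow> (\<lambda>x. \<Sum>j\<in>A. f j x) \<in> polyfun"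
proof (induction A rule: infinite_finite_induct)
  case (insert a A) then show ?case by (simp add: polyfun_add)
qed (auto)
lemma polyfun_prod[intro]: "(\<And>j. j \<in> A \<Longrightarrow> f j \<in> polyfun) \<Longrightarrow> (\<lambda>x. \<Prod>j\<in>A. f j x) \<in> polyfun"
proof (induction A rule: infinite_finite_induct)
  case (insert a A) then show ?case by (simp add: polyfun_mult)
qed (auto)
lemma polyfun_power[intro]: "f \<in> polyfun \<Longrightarrow> (\<lambda>x. f x ^ n) \<in> polyfun"
  using polyfun_prod[of "{..<n}" "\<lambda>_. f"] by simp
lemma polyfun_cong: "f \<in> polyfun \<Longrightarrow> (\<And>x. f x = g x) \<Longrightarrow> g \<in> polyfun"
proof -
  assume "f \<in> polyfun" "\<And>x. f x = g x"
  then have "f = g" by auto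
  with \<open>f \<in> polyfun\<close> show ?thesis by simp
qed

lemma polyfun_line:
  assumes "P \<in> polyfun"
  shows "\<exists>L. \<forall>s. P (\<lambda>i. p i + s * d i) = poly L s"
  using assms
proof induction
  case (const c) show ?case by (rule exI[of _ "[:c:]"]) simp
next
  case (coord i) show ?case by (rule exI[of _ "[:p i, d i:]"]) (simp add: algebra_simps)
next
  case (add f g) then obtain L1 L2 where "\<forall>s. f (\<lambda>i. p i + s * d i) = poly L1 s" "\<forall>s. g (\<lambda>i. p i + s * d i) = poly L2 s" by blast
  then show ?case by (intro exI[of _ "L1+L2"]) simp
next
  case (mult f g) then obtain L1 L2 where "\<forall>s. f (\<lambda>i. p i + s * d i) = poly L1 s" "\<forall>s. g (\<lambda>i. p i + s * d i) = poly L2 s" by blast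
  then show ?case by (intro exI[of _ "L1*L2"]) simp
qed

lemma poly_zero_on_infinite:
  fixes L :: "'k::idom poly"
  assumes "infinite A" "\<And>s. s \<in> A \<Longrightarrow> poly L s = 0"
  shows "L = 0"
proof (rule ccontr)
  assume "L \<noteq> 0"
  then have "finite {x. poly L x = 0}" by (rule poly_roots_finite)
  moreover have "A \<subseteq> {x. poly L x = 0}" using assms(2) by auto
  ultimately show False using assms(1) finite_subset by blast
qed

lemma polyfun_density:
  fixes P :: "('i::finite \<Rightarrow> 'k::field_char_0) \<Rightarrow> 'k"
  assumes "P \<in> polyfun" "\<And>x. (\<forall>i. x i \<noteq> 0) \<Longrightarrow> P x = 0"
  shows "P x = 0"
proof -
  obtain L where L: "\<forall>s. P (\<lambda>i. x i + s * 1) = poly L s" using polyfun_line[OF assms(1), of x "\<lambda>_. 1"] by blast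
  let ?B = "(\<lambda>i. - x i) ` UNIV"
  have "finite ?B" by simp
  then have inf: "infinite (UNIV - ?B)" using infinite_UNIV_char_0 by (metis Diff_infinite_finite)
  have "L = 0"
  proof (rule poly_zero_on_infinite[OF inf])
    fix s assume "s \<in> UNIV - ?B"
    then have "\<forall>i. x i + s * 1 \<noteq> 0" by (auto simp: add_eq_0_iff)
    then show "poly L s = 0" using L assms(2) by metis
  qed
  then show ?thesis using L[rule_format, of 0] by simp
qed

lemma polyfun_domain:
  fixes P Q :: "('i \<Rightarrow> 'k::field_char_0) \<Rightarrow> 'k"
  assumes "P \<in> polyfun" "Q \<in> polyfun" "\<And>x. P x * Q x = 0"
  shows "(\<forall>x. P x = 0) \<or> (\<forall>x. Q x = 0)"
proof (rule ccontr)
  assume "\<not> ?thesis"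
  then obtain x0 x1 where x: "P x0 \<noteq> 0" "Q x1 \<noteq> 0" by auto
  obtain L1 where L1: "\<forall>s. P (\<lambda>i. x0 i + s * (x1 i - x0 i)) = poly L1 s" using polyfun_line[OF assms(1), of x0 "\<lambda>i. x1 i - x0 i"] by blast
  obtain L2 where L2: "\<forall>s. Q (\<lambda>i. x0 i + s * (x1 i - x0 i)) = poly L2 s" using polyfun_line[OF assms(2), of x0 "\<lambda>i. x1 i - x0 i"] by blast
  have "poly (L1 * L2) s = 0" for s using L1 L2 assms(3) by (metis poly_mult)
  then have "L1 * L2 = 0" using poly_all_0_iff_0 by blast
  moreover have "L1 \<noteq> 0" using L1[rule_format, of 0] x(1) by auto
  moreover have "L2 \<noteq> 0" using L2[rule_format, of 1] x(2) by auto
  ultimately show False by simp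
qed



definition mono :: "('i::finite \<Rightarrow> nat) \<Rightarrow> ('i \<Rightarrow> 'k::comm_semiring_1) \<Rightarrow> 'k" where
  "mono m x = (\<Prod>i\<in>UNIV. x i ^ m i)"

lemma mono_add: "mono (m + n) x = mono m x * mono n x"
  by (simp add: mono_def power_add prod.distrib)

lemma mono_zero[simp]: "mono 0 x = 1" by (simp add: mono_def)
lemma mono_zero'[simp]: "mono (\<lambda>_. 0) x = 1" by (simp add: mono_def)

lemma mono_polyfun[intro]: "(\<lambda>x. mono m x) \<in> polyfun"
  unfolding mono_def by (intro polyfun_prod polyfun_power polyfun_coord)

lemma rep_polyfun:
  assumes "finite S"
  shows "(\<lambda>x. \<Sum>m\<in>S. c m * mono m x) \<in> polyfun"
  by (intro polyfun_sum polyfun_mult polyfun_const mono_polyfun)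

lemma regroup:
  fixes d :: "'j \<Rightarrow> 'k::comm_semiring_1"
  assumes "finite J"
  shows "\<exists>S c. finite S \<and> (\<forall>x. (\<Sum>j\<in>J. d j * mono (mn j) x) = (\<Sum>m\<in>S. c m * mono m x))"
proof -
  let ?S = "mn ` J"
  let ?c = "\<lambda>m. \<Sum>j\<in>{j\<in>J. mn j = m}. d j"
  have "(\<Sum>j\<in>J. d j * mono (mn j) x) = (\<Sum>m\<in>?S. ?c m * mono m x)" for x
  proof -
    have "(\<Sum>j\<in>J. d j * mono (mn j) x) = (\<Sum>m\<in>?S. \<Sum>j\<in>{j\<in>J. mn j = m}. d j * mono (mn j) x)"
      by (rule sum.image_gen[OF assms])
    also have "\<dots> = (\<Sum>m\<in>?S. ?c m * mono m x)"
    proof (rule sum.cong[OF refl])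
      fix m assume "m \<in> ?S"
      have "(\<Sum>j\<in>{j\<in>J. mn j = m}. d j * mono (mn j) x) = (\<Sum>j\<in>{j\<in>J. mn j = m}. d j * mono m x)"
        by (rule sum.cong) auto
      also have "\<dots> = ?c m * mono m x" by (rule sum_distrib_right[symmetric])
      finally show "(\<Sum>j\<in>{j\<in>J. mn j = m}. d j * mono (mn j) x) = ?c m * mono m x" .
    qed
    finally show ?thesis .
  qed
  note eq = this
  show ?thesis
    apply (rule exI[of _ ?S], rule exI[of _ ?c])
    using assms eq by simp
qed


lemma polyfun_rep:
  fixes P :: "('i::finite \<Rightarrow> 'k::field) \<Rightarrow> 'k"
  assumes "P \<in> polyfun"
  shows "\<exists>S c. finite S \<and> (\<forall>x. P x = (\<Sum>m\<in>S. c m * mono m x))"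
  using assms
proof induction
  case (const c) show ?case by (rule exI[of _ "{0}"], rule exI[of _ "\<lambda>_. c"]) simp
next
  case (coord i)
  let ?m = "\<lambda>j. if j = i then 1 else 0::nat"
  have "mono ?m x = x i" for x :: "'i \<Rightarrow> 'k"
  proof -
    have "mono ?m x = (\<Prod>j\<in>UNIV. if j = i then x j else 1)" unfolding mono_def by (intro prod.cong) auto
    also have "\<dots> = x i" by (simp add: prod.delta)
    finally show ?thesis .
  qed
  then show ?case by (intro exI[of _ "{?m}"] exI[of _ "\<lambda>_. 1"]) simp
next
  case (add f g)
  then obtain S1 c1 S2 c2 where h: "finite S1" "\<forall>x. f x = (\<Sum>m\<in>S1. c1 m * mono m x)"
    "finite S2" "\<forall>x. g x = (\<Sum>m\<in>S2. c2 m * mono m x)" by blast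
  let ?J = "Inl ` S1 \<union> Inr ` S2"
  let ?d = "\<lambda>j. case j of Inl m \<Rightarrow> c1 m | Inr m \<Rightarrow> c2 m"
  let ?mn = "\<lambda>j. case j of Inl m \<Rightarrow> m | Inr m \<Rightarrow> m"
  have fg: "f x + g x = (\<Sum>j\<in>?J. ?d j * mono (?mn j) x)" for x
  proof -
    have "(\<Sum>j\<in>?J. ?d j * mono (?mn j) x) = (\<Sum>j\<in>Inl ` S1. ?d j * mono (?mn j) x) + (\<Sum>j\<in>Inr ` S2. ?d j * mono (?mn j) x)"
      using h by (intro sum.union_disjoint) auto
    also have "\<dots> = f x + g x" using h by (simp add: sum.reindex)
    finally show ?thesis by simp
  qed
  have fin: "finite ?J" using h by simp
  obtain S c where S: "finite S" and eq: "\<forall>x. (\<Sum>j\<in>?J. ?d j * mono (?mn j) x) = (\<Sum>m\<in>S. c m * mono m x)"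
    using regroup[OF fin, of ?d ?mn] by (elim exE conjE)
  show ?case using fg eq S by (intro exI[of _ S] exI[of _ c]) simp
next
  case (mult f g)
  then obtain S1 c1 S2 c2 where h: "finite S1" "\<forall>x. f x = (\<Sum>m\<in>S1. c1 m * mono m x)"
    "finite S2" "\<forall>x. g x = (\<Sum>m\<in>S2. c2 m * mono m x)" by blast
  let ?J = "S1 \<times> S2"
  let ?d = "\<lambda>(a,b). c1 a * c2 b"
  let ?mn = "\<lambda>(a,b). a + b"
  have fg: "f x * g x = (\<Sum>j\<in>?J. ?d j * mono (?mn j) x)" for x
  proof -
    have "f x * g x = (\<Sum>a\<in>S1. \<Sum>b\<in>S2. (c1 a * mono a x) * (c2 b * mono b x))"
      using h by (simp add: sum_product)
    also have "\<dots> = (\<Sum>(a,b)\<in>?J. (c1 a * mono a x) * (c2 b * mono b x))"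
      by (rule sum.cartesian_product)
    also have "\<dots> = (\<Sum>j\<in>?J. ?d j * mono (?mn j) x)"
      by (rule sum.cong) (auto simp: mono_add mult_ac)
    finally show ?thesis .
  qed
  have fin: "finite ?J" using h by simp
  obtain S c where S: "finite S" and eq: "\<forall>x. (\<Sum>j\<in>?J. ?d j * mono (?mn j) x) = (\<Sum>m\<in>S. c m * mono m x)"
    using regroup[OF fin, of ?d ?mn] by (elim exE conjE)
  show ?case using fg eq S by (intro exI[of _ S] exI[of _ c]) simp
qed



lemma mono_split: "mono m x = mono (m(j:=0)) x * x j ^ m j"
proof -
  have "mono m x = x j ^ m j * (\<Prod>i\<in>UNIV-{j}. x i ^ m i)"
    unfolding mono_def by (rule prod.remove) auto
  moreover have "mono (m(j:=0)) x = (\<Prod>i\<in>UNIV-{j}. x i ^ m i)"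
    unfolding mono_def by (subst prod.remove[of UNIV j]) (auto intro!: prod.cong)
  ultimately show ?thesis by (simp add: mult.commute)
qed

lemma mono_upd_indep: "mono (m(j:=0)) (x(j:=t)) = mono (m(j:=0)) x"
  unfolding mono_def by (rule prod.cong) auto

lemma identity_aux:
  fixes c :: "('i::finite \<Rightarrow> nat) \<Rightarrow> 'k::field_char_0"
  assumes "finite J"
  shows "finite S \<Longrightarrow> (\<forall>m\<in>S. \<forall>i. i \<notin> J \<longrightarrow> m i = 0) \<Longrightarrow>
    (\<forall>x. (\<forall>i. x i \<noteq> 0) \<longrightarrow> (\<Sum>m\<in>S. c m * mono m x) = 0) \<Longrightarrow> (\<forall>m\<in>S. c m = 0)"
  using assms
proof (induction J arbitrary: S c rule: finite_induct)
  case empty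
  then have Ssub: "S \<subseteq> {0}" by (auto simp: fun_eq_iff)
  show ?case
  proof (cases "S = {}")
    case False
    then have "S = {0}" using Ssub by blast
    then show ?thesis using empty(3)[rule_format, of "\<lambda>_. 1"] by (simp add: zero_fun_def)
  qed simp
next
  case (insert j J)
  note fin = insert(4)
  let ?E = "(\<lambda>m. m j) ` S"
  define A where "A e x = (\<Sum>m\<in>{m\<in>S. m j = e}. c m * mono (m(j:=0)) x)" for e x
  have Aupd: "A e (x(j:=t)) = A e x" for e x t unfolding A_def by (simp add: mono_upd_indep)
  have sum_eq: "(\<Sum>m\<in>S. c m * mono m x) = (\<Sum>e\<in>?E. A e x * x j ^ e)" for x
  proof -
    have "(\<Sum>m\<in>S. c m * mono m x) = (\<Sum>e\<in>?E. \<Sum>m\<in>{m\<in>S. m j = e}. c m * mono m x)"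
      by (rule sum.image_gen[OF fin])
    also have "\<dots> = (\<Sum>e\<in>?E. A e x * x j ^ e)"
      unfolding A_def sum_distrib_right
    proof (intro sum.cong refl)
      fix e m assume "m \<in> {m \<in> S. m j = e}"
      then have "m j = e" by simp
      then show "c m * mono m x = c m * mono (m(j := 0)) x * x j ^ e"
        by (subst mono_split[of m x j]) (simp add: mult.assoc)
    qed
    finally show ?thesis .
  qed
  have Azero: "A e x = 0" if x: "\<forall>i. x i \<noteq> 0" and e: "e \<in> ?E" for e x
  proof -
    define Pe where "Pe = (\<Sum>e\<in>?E. monom (A e x) e)"
    have "poly Pe t = (\<Sum>e\<in>?E. A e x * t ^ e)" for t
      unfolding Pe_def by (simp add: poly_sum poly_monom)
    also have "\<dots> t = (\<Sum>m\<in>S. c m * mono m (x(j:=t)))" for t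
      using sum_eq[of "x(j:=t)"] by (simp add: Aupd)
    finally have pt: "poly Pe t = (\<Sum>m\<in>S. c m * mono m (x(j:=t)))" for t .
    have "Pe = 0"
    proof (rule poly_zero_on_infinite[of "UNIV - {0}"])
      show "infinite (UNIV - {0::'k})" using infinite_UNIV_char_0 by simp
      fix t :: 'k assume "t \<in> UNIV - {0}"
      then have "\<forall>i. (x(j:=t)) i \<noteq> 0" using x by auto
      then show "poly Pe t = 0" using pt insert(6) by simp
    qed
    then have "coeff Pe e = 0" by simp
    moreover have "coeff Pe e = A e x"
      unfolding Pe_def coeff_sum coeff_monom using e fin by (simp add: sum.delta)
    ultimately show ?thesis by simp
  qed
  show ?case
  proof
    fix m assume mS: "m \<in> S"
    let ?e = "m j"
    let ?Se = "{m'\<in>S. m' j = ?e}"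
    let ?S' = "(\<lambda>m'. m'(j:=0)) ` ?Se"
    let ?c' = "\<lambda>m'. c (m'(j:=?e))"
    have inj: "inj_on (\<lambda>m'. m'(j:=0)) ?Se"
    proof (rule inj_onI)
      fix a b assume A: "a \<in> ?Se" "b \<in> ?Se" "a(j:=0) = b(j:=0)"
      show "a = b"
      proof
        fix i
        have "(a(j:=0)) i = (b(j:=0)) i" using A(3) by simp
        then show "a i = b i" using A(1,2) by (cases "i = j") auto
      qed
    qed
    have c'eq: "?c' (m'(j:=0)) = c m'" if "m' \<in> ?Se" for m'
    proof -
      have "m' j = m j" using that by simp
      then have "m'(j:=0, j:=m j) = m'" by (simp add: fun_eq_iff)
      then show ?thesis by simp
    qed
    have "\<forall>m'\<in>?S'. ?c' m' = 0"
    proof (rule insert.IH)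
      show "finite ?S'" using fin by simp
      show "\<forall>m'\<in>?S'. \<forall>i. i \<notin> J \<longrightarrow> m' i = 0" using insert(5) by auto
      show "\<forall>x. (\<forall>i. x i \<noteq> 0) \<longrightarrow> (\<Sum>m'\<in>?S'. ?c' m' * mono m' x) = 0"
      proof (intro allI impI)
        fix x :: "'i \<Rightarrow> 'k" assume x: "\<forall>i. x i \<noteq> 0"
        have "(\<Sum>m'\<in>?S'. ?c' m' * mono m' x) = (\<Sum>m'\<in>?Se. ?c' (m'(j:=0)) * mono (m'(j:=0)) x)"
          by (rule sum.reindex[OF inj, unfolded comp_def])
        also have "\<dots> = A ?e x" unfolding A_def by (intro sum.cong refl) (subst c'eq, simp_all)
        also have "\<dots> = 0" using Azero[OF x] mS by blast
        finally show "(\<Sum>m'\<in>?S'. ?c' m' * mono m' x) = 0" .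
      qed
    qed
    then have "?c' (m(j:=0)) = 0" using mS by blast
    then show "c m = 0" by simp
  qed
qed

lemma identity_torus:
  fixes c :: "('i::finite \<Rightarrow> nat) \<Rightarrow> 'k::field_char_0"
  assumes "finite S" "\<And>x. (\<forall>i. x i \<noteq> 0) \<Longrightarrow> (\<Sum>m\<in>S. c m * mono m x) = 0"
  shows "\<forall>m\<in>S. c m = 0"
  using identity_aux[of UNIV S c] assms by auto



lemma uni_integral_dvd:
  fixes F G :: "'k::field poly" and C :: "nat \<Rightarrow> 'k poly"
  assumes ac: "alg_closed TYPE('k)"
  shows "G \<noteq> 0 \<Longrightarrow> F^n + (\<Sum>j<n. C j * F^j * G^(n-j)) = 0 \<Longrightarrow> G dvd F"
proof (induction "degree G" arbitrary: F G rule: less_induct)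
  case less
  show ?case
  proof (cases "degree G = 0")
    case True
    then obtain g where "G = [:g:]" by (metis degree_eq_zeroE)
    with less.prems(1) have g0: "g \<noteq> 0" by simp
    have "G * [:inverse g:] = 1" using \<open>G = [:g:]\<close> g0 by (simp add: one_pCons)
    then have "is_unit G" by (metis dvdI)
    then show ?thesis by auto
  next
    case False
    then obtain r where r: "poly G r = 0" using ac unfolding alg_closed_def by blast
    have "poly (F^n + (\<Sum>j<n. C j * F^j * G^(n-j))) r = 0" using less.prems(2) by simp
    moreover have "poly (\<Sum>j<n. C j * F^j * G^(n-j)) r = 0"
      by (simp add: poly_sum r) (auto intro!: sum.neutral simp: zero_power)
    ultimately have "poly F r ^ n = 0" by simp
    then have "poly F r = 0" by simp
    define q where "q = [:-r, 1:]"
    obtain F1 where F1: "F = q * F1" using \<open>poly F r = 0\<close> poly_eq_0_iff_dvd unfolding q_def by (metis dvdE)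
    obtain G1 where G1: "G = q * G1" using r poly_eq_0_iff_dvd unfolding q_def by (metis dvdE)
    have G10: "G1 \<noteq> 0" using G1 less.prems(1) by auto
    have degG1: "degree G1 < degree G"
    proof -
      have "degree G = degree q + degree G1" unfolding G1 by (rule degree_mult_eq) (use G10 in \<open>auto simp: q_def\<close>)
      then show ?thesis by (simp add: q_def)
    qed
    have eq: "F^n + (\<Sum>j<n. C j * F^j * G^(n-j)) = q^n * (F1^n + (\<Sum>j<n. C j * F1^j * G1^(n-j)))"
    proof -
      have "C j * F^j * G^(n-j) = q^n * (C j * F1^j * G1^(n-j))" if "j < n" for j
      proof -
        have "C j * F^j * G^(n-j) = C j * F1^j * G1^(n-j) * (q^j * q^(n-j))"
          using F1 G1 by (simp add: power_mult_distrib mult_ac)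
        also have "q^j * q^(n-j) = q^n" using that by (simp add: power_add[symmetric])
        finally show ?thesis by (simp add: mult_ac)
      qed
      then have "(\<Sum>j<n. C j * F^j * G^(n-j)) = q^n * (\<Sum>j<n. C j * F1^j * G1^(n-j))"
        unfolding sum_distrib_left by (intro sum.cong) auto
      moreover have "F^n = q^n * F1^n" using F1 by (simp add: power_mult_distrib mult_ac)
      ultimately show ?thesis by (simp add: distrib_left)
    qed
    have "q^n \<noteq> 0" by (simp add: q_def)
    then have "F1^n + (\<Sum>j<n. C j * F1^j * G1^(n-j)) = 0" using eq less.prems(2) by (metis mult_eq_0_iff)
    then have "G1 dvd F1" using less.hyps[OF degG1 G10] by blast
    then show ?thesis using F1 G1 by simp
  qed
qed



lemma fun_sum_apply: "(\<Sum>i\<in>A. f i) x = (\<Sum>i\<in>A. f i x)"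
  by (induction A rule: infinite_finite_induct) auto

lemma fun_prod_apply: "(\<Prod>i\<in>A. f i) x = (\<Prod>i\<in>A. f i x)"
  by (induction A rule: infinite_finite_induct) auto

lemma fun_power_apply: "(f ^ n) x = (f x) ^ n"
  by (induction n) auto

definition pc :: "((('i \<Rightarrow> 'k::field) \<Rightarrow> 'k) poly) \<Rightarrow> bool" where
  "pc L \<longleftrightarrow> (\<forall>n. coeff L n \<in> polyfun)"

lemma polyfun_fun_add: "f \<in> polyfun \<Longrightarrow> g \<in> polyfun \<Longrightarrow> f + g \<in> polyfun"
  using polyfun_add[of f g] by (simp add: plus_fun_def)
lemma polyfun_fun_mult: "f \<in> polyfun \<Longrightarrow> g \<in> polyfun \<Longrightarrow> f * g \<in> polyfun"
  using polyfun_mult[of f g] by (simp add: times_fun_def)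
lemma polyfun_fun_uminus: "f \<in> polyfun \<Longrightarrow> - f \<in> polyfun"
  using polyfun_uminus[of f] by (simp add: fun_Compl_def)
lemma polyfun_zero: "0 \<in> polyfun"
  using polyfun_const[of 0] by (simp add: zero_fun_def)
lemma polyfun_one: "1 \<in> polyfun"
  using polyfun_const[of 1] by (simp add: one_fun_def)
lemma polyfun_fun_sum: "(\<And>i. i \<in> A \<Longrightarrow> f i \<in> polyfun) \<Longrightarrow> sum f A \<in> polyfun"
  by (induction A rule: infinite_finite_induct) (auto intro: polyfun_zero polyfun_fun_add)

lemma pc_0: "pc 0" unfolding pc_def by (simp add: polyfun_zero)
lemma pc_add: "pc A \<Longrightarrow> pc B \<Longrightarrow> pc (A + B)"
  unfolding pc_def by (simp add: polyfun_fun_add)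
lemma pc_uminus: "pc A \<Longrightarrow> pc (- A)"
  unfolding pc_def by (simp add: polyfun_fun_uminus)
lemma pc_diff: "pc A \<Longrightarrow> pc B \<Longrightarrow> pc (A - B)"
  using pc_add[of A "-B"] pc_uminus[of B] by simp
lemma pc_mult: "pc A \<Longrightarrow> pc B \<Longrightarrow> pc (A * B)"
  unfolding pc_def coeff_mult by (auto intro!: polyfun_fun_sum polyfun_fun_mult)
lemma pc_pCons: "a \<in> polyfun \<Longrightarrow> pc A \<Longrightarrow> pc (pCons a A)"
  unfolding pc_def by (simp add: coeff_pCons split: nat.splits)
lemma pc_const: "a \<in> polyfun \<Longrightarrow> pc [:a:]"
  by (intro pc_pCons pc_0)
lemma pc_1: "pc 1" using pc_const[OF polyfun_one] by (simp add: one_pCons)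
lemma pc_monom: "a \<in> polyfun \<Longrightarrow> pc (monom a k)"
  unfolding pc_def by (simp add: coeff_monom polyfun_zero)
lemma pc_power: "pc A \<Longrightarrow> pc (A ^ n)"
  by (induction n) (auto intro: pc_1 pc_mult)
lemma pc_prod: "(\<And>i. i \<in> I \<Longrightarrow> pc (f i)) \<Longrightarrow> pc (\<Prod>i\<in>I. f i)"
  by (induction I rule: infinite_finite_induct) (auto intro: pc_1 pc_mult)
lemma pc_sum: "(\<And>i. i \<in> I \<Longrightarrow> pc (f i)) \<Longrightarrow> pc (\<Sum>i\<in>I. f i)"
  by (induction I rule: infinite_finite_induct) (auto intro: pc_0 pc_add)
lemma pc_smult: "a \<in> polyfun \<Longrightarrow> pc A \<Longrightarrow> pc (smult a A)"
  unfolding pc_def by (simp add: polyfun_fun_mult)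

definition ev :: "('i \<Rightarrow> 'k) \<Rightarrow> ((('i \<Rightarrow> 'k::field) \<Rightarrow> 'k) poly) \<Rightarrow> 'k poly" where
  "ev p L = map_poly (\<lambda>f. f p) L"

lemma coeff_ev: "coeff (ev p L) n = coeff L n p"
  unfolding ev_def by (subst coeff_map_poly) auto

lemma degree_ev: "degree (ev p L) \<le> degree L"
  unfolding ev_def by (rule map_poly_degree_leq)

lemma poly_ev: "poly (ev p L) s = poly L (\<lambda>_. s) p"
proof (induction L)
  case 0 then show ?case by (simp add: ev_def)
next
  case (pCons a L)
  have "ev p (pCons a L) = pCons (a p) (ev p L)" unfolding ev_def by (subst map_poly_pCons) auto
  then show ?case using pCons by simp
qed

lemma ev_eqI:
  fixes A B :: "((('i \<Rightarrow> 'k::field_char_0) \<Rightarrow> 'k) poly)"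
  assumes "\<And>s. poly A (\<lambda>_. s) p = poly B (\<lambda>_. s) p"
  shows "ev p A = ev p B"
proof -
  have "poly (ev p A - ev p B) s = 0" for s using assms by (simp add: poly_ev)
  then have "ev p A - ev p B = 0" using poly_all_0_iff_0 by blast
  then show ?thesis by simp
qed

lemma ev_mult: "ev p (A * B) = ev p A * (ev p (B :: ((('i \<Rightarrow> 'k::field_char_0) \<Rightarrow> 'k) poly)))"
proof -
  have "poly (ev p (A * B)) s = poly (ev p A * ev p B) s" for s by (simp add: poly_ev)
  then have "poly (ev p (A * B) - ev p A * ev p B) s = 0" for s by simp
  then have "ev p (A * B) - ev p A * ev p B = 0" using poly_all_0_iff_0 by blast
  then show ?thesis by simp
qed

lemma ev_add: "ev p (A + B) = ev p A + (ev p (B :: ((('i \<Rightarrow> 'k::field) \<Rightarrow> 'k) poly)))"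
  by (rule poly_eqI) (simp add: coeff_ev)

lemma coeff_mult_bound:
  fixes A B :: "'a::comm_semiring_0 poly"
  assumes "degree A \<le> m" "degree B \<le> n"
  shows "coeff (A * B) (m + n) = coeff A m * coeff B n"
proof (cases "degree A = m \<and> degree B = n")
  case True then show ?thesis using coeff_mult_degree_sum[of A B] by simp
next
  case False
  then have "degree A < m \<or> degree B < n" using assms by auto
  then have "coeff A m * coeff B n = 0" by (auto simp: coeff_eq_0)
  moreover have "degree (A * B) < m + n"
    using degree_mult_le[of A B] \<open>degree A < m \<or> degree B < n\<close> assms by linarith
  ultimately show ?thesis by (simp add: coeff_eq_0)
qed

lemma power_bound:
  fixes A :: "'a::comm_semiring_1 poly"
  assumes "degree A \<le> d"
  shows "degree (A ^ k) \<le> k * d \<and> coeff (A ^ k) (k * d) = coeff A d ^ k"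
proof (induction k)
  case 0 then show ?case by simp
next
  case (Suc k)
  have "degree (A ^ Suc k) \<le> d + k * d"
    using degree_mult_le[of A "A^k"] Suc assms by simp
  moreover have "coeff (A ^ Suc k) (d + k * d) = coeff A d * coeff (A ^ k) (k * d)"
    using coeff_mult_bound[OF assms, of "A^k" "k*d"] Suc by simp
  ultimately show ?case using Suc by simp
qed

lemma prod_bound:
  fixes A :: "'j \<Rightarrow> 'a::comm_semiring_1 poly"
  assumes "finite I" "\<And>i. i \<in> I \<Longrightarrow> degree (A i) \<le> d i"
  shows "degree (\<Prod>i\<in>I. A i) \<le> (\<Sum>i\<in>I. d i) \<and> coeff (\<Prod>i\<in>I. A i) (\<Sum>i\<in>I. d i) = (\<Prod>i\<in>I. coeff (A i) (d i))"
  using assms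
proof (induction I rule: finite_induct)
  case empty then show ?case by simp
next
  case (insert j I)
  then have IH: "degree (\<Prod>i\<in>I. A i) \<le> (\<Sum>i\<in>I. d i)" "coeff (\<Prod>i\<in>I. A i) (\<Sum>i\<in>I. d i) = (\<Prod>i\<in>I. coeff (A i) (d i))" by auto
  have dj: "degree (A j) \<le> d j" using insert by auto
  have "degree (A j * (\<Prod>i\<in>I. A i)) \<le> d j + (\<Sum>i\<in>I. d i)"
    using degree_mult_le[of "A j" "\<Prod>i\<in>I. A i"] IH dj by linarith
  moreover have "coeff (A j * (\<Prod>i\<in>I. A i)) (d j + (\<Sum>i\<in>I. d i)) = coeff (A j) (d j) * (\<Prod>i\<in>I. coeff (A i) (d i))"
    using coeff_mult_bound[OF dj IH(1)] IH(2) by simp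
  ultimately show ?case using insert by simp
qed



definition lin :: "('i \<Rightarrow> 'k::field) \<Rightarrow> 'i \<Rightarrow> ((('i \<Rightarrow> 'k) \<Rightarrow> 'k) poly)" where
  "lin a i = [:(\<lambda>p. p i), (\<lambda>_. a i):]"
definition LM :: "('i::finite \<Rightarrow> 'k::field) \<Rightarrow> ('i \<Rightarrow> nat) \<Rightarrow> ((('i \<Rightarrow> 'k) \<Rightarrow> 'k) poly)" where
  "LM a m = (\<Prod>i\<in>UNIV. lin a i ^ m i)"
definition deg :: "('i::finite \<Rightarrow> nat) \<Rightarrow> nat" where
  "deg m = (\<Sum>i\<in>UNIV. m i)"
definition LR :: "('i::finite \<Rightarrow> 'k::field) \<Rightarrow> ('i \<Rightarrow> nat) set \<Rightarrow> (('i \<Rightarrow> nat) \<Rightarrow> 'k) \<Rightarrow> ((('i \<Rightarrow> 'k) \<Rightarrow> 'k) poly)" where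
  "LR a S c = (\<Sum>m\<in>S. smult (\<lambda>_. c m) (LM a m))"

lemma poly_lin: "poly (lin a i) (\<lambda>_. s) p = p i + s * a i"
  unfolding lin_def by simp

lemma poly_LM: "poly (LM a m) (\<lambda>_. s) p = mono m (\<lambda>i. p i + s * a i)"
  unfolding LM_def mono_def by (simp add: poly_prod fun_prod_apply fun_power_apply poly_lin)

lemma pc_lin: "pc (lin a i)"
  unfolding lin_def by (intro pc_pCons pc_const polyfun_coord polyfun_const)

lemma pc_LM: "pc (LM a m)"
  unfolding LM_def by (intro pc_prod pc_power pc_lin)

lemma LM_bound: "degree (LM a m) \<le> deg m \<and> coeff (LM a m) (deg m) = (\<lambda>_. mono m a)"
proof -
  have d1: "degree (lin a i) \<le> 1" for i unfolding lin_def by simp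
  have c1: "coeff (lin a i) 1 = (\<lambda>_. a i)" for i unfolding lin_def by simp
  have pw: "degree (lin a i ^ m i) \<le> m i \<and> coeff (lin a i ^ m i) (m i) = (\<lambda>_. a i) ^ m i" for i
    using power_bound[OF d1, of i "m i"] c1 by simp
  have "degree (LM a m) \<le> deg m \<and> coeff (LM a m) (deg m) = (\<Prod>i\<in>UNIV. (\<lambda>_. a i) ^ m i)"
    unfolding LM_def deg_def using prod_bound[of UNIV "\<lambda>i. lin a i ^ m i" m] pw by auto
  moreover have "(\<Prod>i\<in>UNIV. (\<lambda>_. a i) ^ m i) = (\<lambda>_::('i\<Rightarrow>'b). mono m a)"
    by (rule ext) (simp add: fun_prod_apply fun_power_apply mono_def)
  ultimately show ?thesis by simp
qed

lemma poly_LR: "poly (LR a S c) (\<lambda>_. s) p = (\<Sum>m\<in>S. c m * mono m (\<lambda>i. p i + s * a i))"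
  unfolding LR_def by (simp add: poly_sum fun_sum_apply poly_LM)

lemma pc_LR: "pc (LR a S c)"
  unfolding LR_def by (intro pc_sum pc_smult pc_LM polyfun_const)

lemma LR_bound:
  assumes "finite S" "\<And>m. m \<in> S \<Longrightarrow> deg m \<le> D"
  shows "degree (LR a S c) \<le> D \<and> coeff (LR a S c) D = (\<lambda>_. \<Sum>m\<in>{m\<in>S. deg m = D}. c m * mono m a)"
proof
  show "degree (LR a S c) \<le> D"
    unfolding LR_def
  proof (rule degree_sum_le[OF assms(1)])
    fix m assume "m \<in> S"
    then show "degree (smult (\<lambda>_. c m) (LM a m)) \<le> D"
      using LM_bound[of a m] assms(2)[of m] degree_smult_le[of "\<lambda>_. c m" "LM a m"] by linarith
  qed
  have cm: "coeff (smult (\<lambda>_. c m) (LM a m)) D = (\<lambda>_. if deg m = D then c m * mono m a else 0)" if "m \<in> S" for m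
  proof (cases "deg m = D")
    case True then show ?thesis using LM_bound[of a m] by (auto simp: times_fun_def)
  next
    case False
    then have "deg m < D" using assms(2)[OF that] by simp
    then have "coeff (LM a m) D = 0" using LM_bound[of a m] by (intro coeff_eq_0) simp
    then show ?thesis using False by (auto simp: zero_fun_def)
  qed
  have "coeff (LR a S c) D = (\<Sum>m\<in>S. (\<lambda>_. if deg m = D then c m * mono m a else 0))"
    unfolding LR_def coeff_sum by (intro sum.cong refl) (rule cm)
  also have "\<dots> = (\<lambda>_. \<Sum>m\<in>{m\<in>S. deg m = D}. c m * mono m a)"
    by (rule ext) (simp add: fun_sum_apply sum.inter_filter[OF assms(1)])
  finally show "coeff (LR a S c) D = (\<lambda>_. \<Sum>m\<in>{m\<in>S. deg m = D}. c m * mono m a)" .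
qed

lemma pc_div:
  fixes G :: "((('i \<Rightarrow> 'k::field) \<Rightarrow> 'k) poly)"
  assumes "pc G" "degree G = D" "coeff G D = (\<lambda>_. \<gamma>)" "\<gamma> \<noteq> 0"
  shows "pc L \<Longrightarrow> \<exists>Q Rm. pc Q \<and> pc Rm \<and> L = Q * G + Rm \<and> (Rm = 0 \<or> degree Rm < D)"
proof (induction "degree L" arbitrary: L rule: less_induct)
  case less
  show ?case
  proof (cases "degree L < D")
    case True then show ?thesis using less.prems by (intro exI[of _ 0] exI[of _ L]) (simp add: pc_0)
  next
    case False
    define N where "N = degree L"
    define k where "k = N - D"
    define lc where "lc = coeff L N * (\<lambda>_. inverse \<gamma>)"
    define M where "M = monom lc k * G"
    have kD: "k + D = N" using False unfolding k_def N_def by simp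
    have lcpf: "lc \<in> polyfun" unfolding lc_def using less.prems unfolding pc_def
      by (intro polyfun_fun_mult) auto
    have pcM: "pc M" unfolding M_def by (intro pc_mult pc_monom lcpf assms(1))
    have degM: "degree M \<le> N" unfolding M_def using degree_mult_le[of "monom lc k" G] degree_monom_le[of lc k] assms(2) kD by linarith
    have cM: "coeff M N = coeff L N" unfolding M_def coeff_monom_mult using kD assms(3,4)
      by (auto simp: lc_def times_fun_def)
    define L' where "L' = L - M"
    have pcL': "pc L'" unfolding L'_def by (intro pc_diff less.prems pcM)
    have degL': "degree L' \<le> N" unfolding L'_def N_def using degree_diff_le degM N_def by blast
    have cL': "coeff L' N = 0" unfolding L'_def using cM by simp
    have L'cases: "L' = 0 \<or> degree L' < N"
    proof (rule ccontr)
      assume "\<not> ?thesis"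
      then have "L' \<noteq> 0" "degree L' = N" using degL' by auto
      then show False using cL' by (metis leading_coeff_0_iff)
    qed
    show ?thesis
    proof (cases "L' = 0")
      case True
      then have "L = monom lc k * G + 0" unfolding L'_def M_def by simp
      then show ?thesis using pc_monom[OF lcpf] pc_0 by blast
    next
      case False
      with L'cases have "degree L' < degree L" unfolding N_def by simp
      from less.hyps[OF this pcL'] obtain Q Rm where QR: "pc Q" "pc Rm" "L' = Q * G + Rm" "Rm = 0 \<or> degree Rm < D" by blast
      have "L = (Q + monom lc k) * G + Rm" using QR(3) unfolding L'_def M_def by (simp add: algebra_simps)
      then show ?thesis using QR pc_add[OF QR(1) pc_monom[OF lcpf]] by blast
    qed
  qed
qed



lemma poly_normal:
  fixes P1 P2 :: "('i::finite \<Rightarrow> 'k::field_char_0) \<Rightarrow> 'k" and Q :: "nat \<Rightarrow> ('i \<Rightarrow> 'k) \<Rightarrow> 'k"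
  assumes ac: "alg_closed TYPE('k)" and P1: "P1 \<in> polyfun" and P2: "P2 \<in> polyfun"
    and nz: "\<exists>x. P2 x \<noteq> 0" and Qp: "\<forall>j<n. Q j \<in> polyfun"
    and rel: "\<forall>x. P1 x ^ n + (\<Sum>j<n. Q j x * P1 x ^ j * P2 x ^ (n-j)) = 0"
  shows "\<exists>H\<in>polyfun. \<forall>x. P1 x = H x * P2 x"
proof -
  obtain S c where finS: "finite S" and repS: "\<forall>x. P2 x = (\<Sum>m\<in>S. c m * mono m x)"
    using polyfun_rep[OF P2] by blast
  define S' where "S' = {m\<in>S. c m \<noteq> 0}"
  have finS': "finite S'" using finS unfolding S'_def by simp
  have repS': "P2 x = (\<Sum>m\<in>S'. c m * mono m x)" for x
  proof -
    have "(\<Sum>m\<in>S'. c m * mono m x) = (\<Sum>m\<in>S. if c m \<noteq> 0 then c m * mono m x else 0)"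
      unfolding S'_def using finS by (simp add: sum.inter_filter)
    also have "\<dots> = (\<Sum>m\<in>S. c m * mono m x)" by (intro sum.cong) auto
    finally show ?thesis using repS by simp
  qed
  have S'ne: "S' \<noteq> {}" using nz repS' by auto
  define D where "D = Max (deg ` S')"
  define T where "T = {m\<in>S'. deg m = D}"
  have degle: "deg m \<le> D" if "m \<in> S'" for m unfolding D_def using finS' that by simp
  have Tne: "T \<noteq> {}"
  proof -
    have "D \<in> deg ` S'" unfolding D_def using Max_in[of "deg ` S'"] finS' S'ne by auto
    then show ?thesis unfolding T_def by auto
  qed
  have finT: "finite T" unfolding T_def using finS' by simp
  obtain a where a: "(\<Sum>m\<in>T. c m * mono m a) \<noteq> 0"
  proof (rule ccontr)
    assume "\<not> thesis"
    then have "\<And>x. (\<forall>i. x i \<noteq> 0) \<Longrightarrow> (\<Sum>m\<in>T. c m * mono m x) = 0" using that by blast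
    then have "\<forall>m\<in>T. c m = 0" by (rule identity_torus[OF finT])
    then show False using Tne unfolding T_def S'_def by auto
  qed
  define \<gamma> where "\<gamma> = (\<Sum>m\<in>T. c m * mono m a)"
  define LG where "LG = LR a S' c"
  have LGb: "degree LG \<le> D" "coeff LG D = (\<lambda>_. \<gamma>)"
    using LR_bound[OF finS' degle, of a c] unfolding LG_def \<gamma>_def T_def by auto
  have "coeff LG D \<noteq> 0" using LGb(2) a unfolding \<gamma>_def by (metis zero_fun_def)
  then have degLG: "degree LG = D" using LGb(1) le_degree by (metis le_antisym)
  obtain S1 c1 where finS1: "finite S1" and repS1: "\<forall>x. P1 x = (\<Sum>m\<in>S1. c1 m * mono m x)"
    using polyfun_rep[OF P1] by blast
  define LF where "LF = LR a S1 c1"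
  obtain Qd Rm where QR: "pc Qd" "pc Rm" "LF = Qd * LG + Rm" "Rm = 0 \<or> degree Rm < D"
    using pc_div[OF pc_LR degLG[unfolded LG_def] LGb(2)[unfolded LG_def], of LF] a pc_LR
    unfolding \<gamma>_def LF_def LG_def by blast
  define H where "H = coeff Qd 0"
  have Hpf: "H \<in> polyfun" using QR(1) unfolding pc_def H_def by simp
  have "P1 p = H p * P2 p" for p
  proof -
    define Fp where "Fp = ev p LF"
    define Gp where "Gp = ev p LG"
    define Qp where "Qp = ev p Qd"
    define Rp where "Rp = ev p Rm"
    have FQR: "Fp = Qp * Gp + Rp" unfolding Fp_def Gp_def Qp_def Rp_def QR(3) by (simp add: ev_add ev_mult)
    have pF: "poly Fp s = P1 (\<lambda>i. p i + s * a i)" for s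
      unfolding Fp_def LF_def poly_ev poly_LR using repS1 by simp
    have pG: "poly Gp s = P2 (\<lambda>i. p i + s * a i)" for s
      unfolding Gp_def LG_def poly_ev poly_LR using repS' by simp
    have "\<forall>j. \<exists>L. j < n \<longrightarrow> (\<forall>s. Q j (\<lambda>i. p i + s * a i) = poly L s)"
    proof
      fix j show "\<exists>L. j < n \<longrightarrow> (\<forall>s. Q j (\<lambda>i. p i + s * a i) = poly L s)"
      proof (cases "j < n")
        case True
        then have "Q j \<in> polyfun" using Qp by simp
        from polyfun_line[OF this, of p a] show ?thesis by blast
      qed simp
    qed
    from choice[OF this] obtain CL where CL0: "\<forall>j. j < n \<longrightarrow> (\<forall>s. Q j (\<lambda>i. p i + s * a i) = poly (CL j) s)"
      by blast
    have CL: "Q j (\<lambda>i. p i + s * a i) = poly (CL j) s" if "j < n" for j s using CL0 that by blast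
    have "poly (Fp^n + (\<Sum>j<n. CL j * Fp^j * Gp^(n-j))) s = 0" for s
    proof -
      have "poly (Fp^n + (\<Sum>j<n. CL j * Fp^j * Gp^(n-j))) s
          = P1 (\<lambda>i. p i + s * a i) ^ n + (\<Sum>j<n. Q j (\<lambda>i. p i + s * a i) * P1 (\<lambda>i. p i + s * a i) ^ j * P2 (\<lambda>i. p i + s * a i) ^ (n-j))"
        by (simp add: poly_sum pF pG) (intro sum.cong refl, simp add: CL)
      also have "\<dots> = 0" using rel by blast
      finally show ?thesis .
    qed
    then have relp: "Fp^n + (\<Sum>j<n. CL j * Fp^j * Gp^(n-j)) = 0" using poly_all_0_iff_0 by blast
    have cG: "coeff Gp D = \<gamma>" unfolding Gp_def coeff_ev using LGb(2) by simp
    then have Gp0: "Gp \<noteq> 0" using a unfolding \<gamma>_def by auto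
    have degGp: "D \<le> degree Gp" using cG a unfolding \<gamma>_def by (intro le_degree) simp
    have "Gp dvd Fp" using uni_integral_dvd[OF ac Gp0 relp] .
    then have "Gp dvd Rp" 
    proof -
      have "Rp = Fp - Qp * Gp" using FQR by simp
      moreover have "Gp dvd Qp * Gp" by simp
      ultimately show ?thesis using \<open>Gp dvd Fp\<close> by (simp add: dvd_diff)
    qed
    have "Rp = 0"
    proof (rule ccontr)
      assume Rp0: "Rp \<noteq> 0"
      then have "Rm \<noteq> 0" unfolding Rp_def by (auto intro!: poly_eqI simp: coeff_ev)
      then have "degree Rm < D" using QR(4) by simp
      moreover have "degree Rp \<le> degree Rm" unfolding Rp_def by (rule degree_ev)
      moreover have "degree Gp \<le> degree Rp" using \<open>Gp dvd Rp\<close> Rp0 by (rule dvd_imp_degree_le)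
      ultimately show False using degGp by linarith
    qed
    then have "Fp = Qp * Gp" using FQR by simp
    then have "poly Fp 0 = poly Qp 0 * poly Gp 0" by simp
    moreover have "poly Qp 0 = H p" unfolding Qp_def H_def by (simp add: poly_0_coeff_0 coeff_ev)
    ultimately show ?thesis using pF[of 0] pG[of 0] by simp
  qed
  then show ?thesis using Hpf by blast
qed



definition chi :: "('v::finite \<Rightarrow> int) \<Rightarrow> ('v \<Rightarrow> 'k::field) \<Rightarrow> 'k" where
  "chi m g = (\<Prod>v\<in>UNIV. g v powi m v)"

definition Dg :: "('v::finite \<Rightarrow> 'k::field) \<Rightarrow> 'k" where "Dg g = (\<Prod>v\<in>UNIV. g v)"

lemma chi_add: "\<forall>v. g v \<noteq> 0 \<Longrightarrow> chi (m1 + m2) g = chi m1 g * chi m2 g"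
  unfolding chi_def by (simp add: power_int_add prod.distrib)

lemma chi_zero[simp]: "chi 0 g = 1" unfolding chi_def by simp
lemma chi_zero'[simp]: "chi (\<lambda>_. 0) g = 1" unfolding chi_def by simp

lemma chi_sum: "\<forall>v. g v \<noteq> 0 \<Longrightarrow> chi (\<Sum>a\<in>A. f a) g = (\<Prod>a\<in>A. chi (f a) g)"
  by (induction A rule: infinite_finite_induct) (auto simp: chi_add)

lemma chi_nat: "chi (\<lambda>v. int (m v)) g = mono m g"
  unfolding chi_def mono_def by simp

lemma chi_scale: "chi (\<lambda>v. int k * m v) g = chi m g ^ k"
  unfolding chi_def by (simp add: power_int_mult mult.commute[of "int k"] prod_power_distrib)

lemma chi_uminus: "\<forall>v. g v \<noteq> 0 \<Longrightarrow> chi (- m) g * chi m g = 1"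
  using chi_add[of g "-m" m] by simp

lemma Dg_chi: "Dg g ^ E = chi (\<lambda>_. int E) g"
  unfolding chi_def Dg_def by (simp add: prod_power_distrib)

lemma Dg_nz: "\<forall>v. g v \<noteq> 0 \<Longrightarrow> Dg g \<noteq> 0"
  unfolding Dg_def by simp

lemma chi_shift: assumes "\<forall>v. g v \<noteq> 0"
  shows "chi (\<lambda>v. int (m v) - int E) g * Dg g ^ E = mono m g"
proof -
  have "(\<lambda>v. int (m v) - int E) = (\<lambda>v. int (m v)) + (- (\<lambda>_. int E))" by (simp add: fun_eq_iff)
  then have "chi (\<lambda>v. int (m v) - int E) g = mono m g * chi (- (\<lambda>_. int E)) g"
    using chi_add[OF assms] chi_nat by metis
  moreover have "chi (- (\<lambda>_. int E)) g * Dg g ^ E = 1"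
    using chi_uminus[OF assms, of "\<lambda>_. int E"] Dg_chi by metis
  ultimately show ?thesis by (metis mult.assoc mult.right_neutral)
qed

lemma powi_sum: "(x::'k::field) \<noteq> 0 \<Longrightarrow> (\<Prod>v\<in>A. x powi f v) = x powi (\<Sum>v\<in>A. f v)"
  by (induction A rule: infinite_finite_induct) (auto simp: power_int_add)

lemma chi_gl:
  assumes "(l::'k::field) \<noteq> 0" "\<forall>v. g v \<noteq> 0"
  shows "chi m (\<lambda>v. l powi u v * g v) = l powi (\<Sum>v\<in>UNIV. u v * m v) * chi m g"
proof -
  have "chi m (\<lambda>v. l powi u v * g v) = (\<Prod>v\<in>UNIV. l powi (u v * m v) * g v powi m v)"
    unfolding chi_def by (simp add: power_int_mult_distrib power_int_mult)
  also have "\<dots> = (\<Prod>v\<in>UNIV. l powi (u v * m v)) * chi m g"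
    unfolding chi_def by (rule prod.distrib)
  also have "(\<Prod>v\<in>UNIV. l powi (u v * m v)) = l powi (\<Sum>v\<in>UNIV. u v * m v)"
    by (rule powi_sum[OF assms(1)])
  finally show ?thesis .
qed

definition wv :: "('a \<Rightarrow> 'v) \<Rightarrow> ('a \<Rightarrow> 'v) \<Rightarrow> 'a \<Rightarrow> 'v \<Rightarrow> int" where
  "wv h t a v = (if v = h a then 1 else 0) - (if v = t a then 1 else 0)"

lemma chi_wv:
  assumes "\<forall>v. g v \<noteq> 0"
  shows "chi (wv h t a) (g :: 'v::finite \<Rightarrow> 'k::field) = g (h a) * inverse (g (t a))"
proof -
  have "g v powi wv h t a v = (if v = h a then g v else 1) * (if v = t a then inverse (g v) else 1)" for v
    using assms[rule_format, of v] unfolding wv_def by (auto simp: power_int_minus)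
  then have "chi (wv h t a) g = (\<Prod>v\<in>UNIV. (if v = h a then g v else 1) * (if v = t a then inverse (g v) else 1))"
    unfolding chi_def by simp
  also have "\<dots> = g (h a) * inverse (g (t a))"
    by (simp add: prod.distrib prod.delta)
  finally show ?thesis .
qed

lemma sum_wv: "(\<Sum>v\<in>UNIV. u v * wv h t a (v::'v::finite)) = u (h a) - u (t a)"
proof -
  have "u v * wv h t a v = (if v = h a then u v else 0) - (if v = t a then u v else 0)" for v
    unfolding wv_def by auto
  then have "(\<Sum>v\<in>UNIV. u v * wv h t a v) = (\<Sum>v\<in>UNIV. (if v = h a then u v else 0)) - (\<Sum>v\<in>UNIV. (if v = t a then u v else 0))"
    by (simp add: sum_subtractf)
  then show ?thesis by (simp add: sum.delta)
qed



definition closedU :: "'a set \<Rightarrow> ('a \<Rightarrow> 'v) \<Rightarrow> ('a \<Rightarrow> 'v) \<Rightarrow> 'v set \<Rightarrow> bool" where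
  "closedU E h t U \<longleftrightarrow> (\<forall>a\<in>E. t a \<in> U \<longrightarrow> h a \<in> U)"

definition inM :: "'a::finite set \<Rightarrow> ('a \<Rightarrow> 'v) \<Rightarrow> ('a \<Rightarrow> 'v) \<Rightarrow> ('v \<Rightarrow> int) \<Rightarrow> bool" where
  "inM E h t m \<longleftrightarrow> (\<exists>N::'a \<Rightarrow> nat. (\<forall>a. a \<notin> E \<longrightarrow> N a = 0) \<and> (\<forall>v. m v = (\<Sum>a\<in>UNIV. int (N a) * wv h t a v)))"

definition dl :: "'v \<Rightarrow> 'v \<Rightarrow> int" where "dl z = (\<lambda>v. if v = z then 1 else 0)"

lemma inM_zero: "inM E h t (\<lambda>_. 0)"
  unfolding inM_def by (rule exI[of _ "\<lambda>_. 0"]) simp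

lemma inM_add: "inM E h t m1 \<Longrightarrow> inM E h t m2 \<Longrightarrow> inM E h t (\<lambda>v. m1 v + m2 v)"
proof -
  assume "inM E h t m1" "inM E h t m2"
  then obtain N1 N2 where N: "\<forall>a. a \<notin> E \<longrightarrow> N1 a = 0" "\<forall>v. m1 v = (\<Sum>a\<in>UNIV. int (N1 a) * wv h t a v)"
    "\<forall>a. a \<notin> E \<longrightarrow> N2 a = 0" "\<forall>v. m2 v = (\<Sum>a\<in>UNIV. int (N2 a) * wv h t a v)"
    unfolding inM_def by blast
  show ?thesis unfolding inM_def
    by (rule exI[of _ "\<lambda>a. N1 a + N2 a"]) (simp add: N algebra_simps sum.distrib)
qed

lemma inM_path:
  assumes "(x, y) \<in> {(t a, h a) | a. a \<in> E}\<^sup>*"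
  shows "inM E h t (\<lambda>v. dl y v - dl x v)"
  using assms
proof (induction rule: rtrancl_induct)
  case base then show ?case using inM_zero by simp
next
  case (step y z)
  then obtain a where a: "a \<in> E" "y = t a" "z = h a" by blast
  have "inM E h t (wv h t a)"
    unfolding inM_def
  proof (rule exI[of _ "\<lambda>b. if b = a then 1 else 0"], intro conjI allI impI)
    fix b assume "b \<notin> E" then show "(if b = a then 1 else 0) = (0::nat)" using a by auto
  next
    fix v show "wv h t a v = (\<Sum>b\<in>UNIV. int (if b = a then 1 else 0) * wv h t b v)"
    proof -
      have "(\<Sum>b\<in>UNIV. int (if b = a then 1 else 0) * wv h t b v) = (\<Sum>b\<in>UNIV. if b = a then wv h t b v else 0)"
        by (rule sum.cong) auto
      then show ?thesis by simp
    qed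
  qed
  from inM_add[OF step.IH this] show ?case
    using a by (simp add: dl_def wv_def)
qed

lemma closed_reach:
  assumes "closedU E h t U" "x \<in> U" "(x, y) \<in> {(t a, h a) | a. a \<in> E}\<^sup>*"
  shows "y \<in> U"
  using assms(3,2)
proof (induction rule: rtrancl_induct)
  case (step y z) then show ?case using assms(1) unfolding closedU_def by blast
qed simp

lemma closed_union: "closedU E h t A \<Longrightarrow> closedU E h t B \<Longrightarrow> closedU E h t (A \<union> B)"
  unfolding closedU_def by blast
lemma closed_inter: "closedU E h t A \<Longrightarrow> closedU E h t B \<Longrightarrow> closedU E h t (A \<inter> B)"
  unfolding closedU_def by blast

lemma tight_union:
  fixes m :: "'v::finite \<Rightarrow> int"
  assumes cl: "\<forall>U. closedU E h t U \<longrightarrow> sum m U \<ge> 0"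
    and A: "closedU E h t A" "sum m A = 0" and B: "closedU E h t B" "sum m B = 0"
  shows "sum m (A \<union> B) = 0"
proof -
  have "sum m (A \<union> B) + sum m (A \<inter> B) = sum m A + sum m B" by (rule sum.union_inter) auto
  moreover have "sum m (A \<union> B) \<ge> 0" using cl closed_union[OF A(1) B(1)] by blast
  moreover have "sum m (A \<inter> B) \<ge> 0" using cl closed_inter[OF A(1) B(1)] by blast
  ultimately show ?thesis using A(2) B(2) by linarith
qed

lemma flow_decomp:
  fixes h t :: "'a::finite \<Rightarrow> 'v::finite" and m :: "'v \<Rightarrow> int"
  shows "sum m UNIV = 0 \<Longrightarrow> (\<forall>U. closedU E h t U \<longrightarrow> sum m U \<ge> 0) \<Longrightarrow> inM E h t m"
proof (induction "\<Sum>v\<in>UNIV. nat \<bar>m v\<bar>" arbitrary: m rule: less_induct)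
  case less
  note sum0 = less.prems(1) and cl = less.prems(2)
  let ?rel = "{(t a, h a) | a. a \<in> E}"
  show ?case
  proof (cases "\<forall>v. m v = 0")
    case True
    then have "m = (\<lambda>_. 0)" by auto
    then show ?thesis using inM_zero by simp
  next
    case False
    have "\<exists>v. m v < 0"
    proof (rule ccontr)
      assume "\<not> ?thesis"
      then have nn: "\<forall>v. m v \<ge> 0" by (simp add: not_less)
      then have "\<forall>v\<in>UNIV. m v = 0" using sum_nonneg_eq_0_iff[of UNIV m] sum0 by simp
      then show False using False by simp
    qed
    then obtain v where v: "m v < 0" by blast
    define R where "R = {y. (v, y) \<in> ?rel\<^sup>*}"
    have Rcl: "closedU E h t R" unfolding closedU_def
    proof (intro ballI impI)
      fix a assume "a \<in> E" "t a \<in> R"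
      then have "(v, t a) \<in> ?rel\<^sup>*" "(t a, h a) \<in> ?rel" unfolding R_def by auto
      then have "(v, h a) \<in> ?rel\<^sup>*" by (rule rtrancl_into_rtrancl)
      then show "h a \<in> R" unfolding R_def by simp
    qed
    have vR: "v \<in> R" unfolding R_def by simp
    define tight where "tight U \<longleftrightarrow> closedU E h t U \<and> sum m U = 0" for U
    have "\<exists>u\<in>R. m u > 0 \<and> (\<forall>U. tight U \<longrightarrow> u \<in> U \<longrightarrow> v \<in> U)"
    proof (rule ccontr)
      assume "\<not> ?thesis"
      then have bad: "\<forall>u\<in>{u\<in>R. m u > 0}. \<exists>U. tight U \<and> u \<in> U \<and> v \<notin> U" by blast
      have "\<exists>U. tight U \<and> {u\<in>R. m u > 0} \<subseteq> U \<and> v \<notin> U"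
      proof -
        have "finite P \<Longrightarrow> P \<subseteq> {u\<in>R. m u > 0} \<Longrightarrow> \<exists>U. tight U \<and> P \<subseteq> U \<and> v \<notin> U" for P
        proof (induction P rule: finite_induct)
          case empty
          have "tight {}" unfolding tight_def closedU_def by simp
          then show ?case by blast
        next
          case (insert p P)
          then obtain U1 where U1: "tight U1" "P \<subseteq> U1" "v \<notin> U1" by blast
          obtain U2 where U2: "tight U2" "p \<in> U2" "v \<notin> U2" using bad insert.prems by blast
          have "tight (U1 \<union> U2)" using U1(1) U2(1) tight_union[OF cl] closed_union unfolding tight_def by blast
          then show ?case using U1 U2 by blast
        qed
        then show ?thesis by simp
      qed
      then obtain U where U: "tight U" "{u\<in>R. m u > 0} \<subseteq> U" "v \<notin> U" by blast
      have "sum m (R - U) < 0"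
      proof -
        have "sum m (R - U) \<le> sum m {v}"
        proof -
          have "R - U = insert v (R - U - {v})" using vR U(3) by blast
          then have "sum m (R - U) = m v + sum m (R - U - {v})"
            by (metis finite sum.insert Diff_iff insertI1)
          then have "sum m (R - U) = sum m {v} + sum m (R - U - {v})" by simp
          moreover have "sum m (R - U - {v}) \<le> 0"
            by (rule sum_nonpos) (use U(2) in \<open>auto simp: not_less\<close>)
          ultimately show ?thesis by simp
        qed
        then show ?thesis using v by simp
      qed
      moreover have "sum m (U \<union> (R - U)) = sum m U + sum m (R - U)" by (rule sum.union_disjoint) auto
      moreover have "U \<union> (R - U) = U \<union> R" by blast
      moreover have "sum m (U \<union> R) \<ge> 0" using cl closed_union[of E h t U R] U(1) Rcl unfolding tight_def by blast
      ultimately have "sum m (U \<union> R) = sum m U + sum m (R - U)" by simp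
      then show False using U(1) \<open>sum m (R - U) < 0\<close> \<open>sum m (U \<union> R) \<ge> 0\<close> unfolding tight_def by linarith
    qed
    then obtain u where uR: "u \<in> R" and mu: "m u > 0" and ut: "\<forall>U. tight U \<longrightarrow> u \<in> U \<longrightarrow> v \<in> U" by blast
    have uv: "u \<noteq> v" using mu v by auto
    have path: "(v, u) \<in> ?rel\<^sup>*" using uR unfolding R_def by simp
    define m' where "m' = (\<lambda>x. m x - (dl u x - dl v x))"
    have sum'0: "sum m' UNIV = 0"
      unfolding m'_def using sum0 by (simp add: sum_subtractf dl_def)
    have cl': "\<forall>U. closedU E h t U \<longrightarrow> sum m' U \<ge> 0"
    proof (intro allI impI)
      fix U assume cU: "closedU E h t U"
      have sU: "sum m' U = sum m U - ((if u \<in> U then 1 else 0) - (if v \<in> U then 1 else 0))"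
        unfolding m'_def dl_def by (simp add: sum_subtractf)
      have ge: "sum m U \<ge> 0" using cl cU by blast
      show "sum m' U \<ge> 0"
      proof (cases "v \<in> U")
        case True
        then have "u \<in> U" using closed_reach[OF cU True path] by simp
        then show ?thesis using sU ge True by simp
      next
        case False
        show ?thesis
        proof (cases "u \<in> U")
          case True
          then have "\<not> tight U" using ut False by blast
          then have "sum m U \<ge> 1" using ge cU unfolding tight_def by linarith
          then show ?thesis using sU by simp
        qed (use sU ge False in simp)
      qed
    qed
    have less': "(\<Sum>x\<in>UNIV. nat \<bar>m' x\<bar>) < (\<Sum>x\<in>UNIV. nat \<bar>m x\<bar>)"
    proof (rule sum_strict_mono_ex1)
      show "\<forall>x\<in>UNIV. nat \<bar>m' x\<bar> \<le> nat \<bar>m x\<bar>"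
      proof
        fix x show "nat \<bar>m' x\<bar> \<le> nat \<bar>m x\<bar>"
        proof (cases "x = u")
          case True then show ?thesis unfolding m'_def dl_def using mu uv by simp
        next
          case False
          then show ?thesis
          proof (cases "x = v")
            case True then show ?thesis unfolding m'_def dl_def using v uv \<open>x \<noteq> u\<close> by simp
          qed (simp add: m'_def dl_def)
        qed
      qed
      show "\<exists>x\<in>UNIV. nat \<bar>m' x\<bar> < nat \<bar>m x\<bar>"
        unfolding m'_def dl_def using mu uv by (intro bexI[of _ u]) simp_all
    qed simp
    have "inM E h t m'" using less.hyps[OF less' sum'0 cl'] .
    from inM_add[OF this inM_path[OF path]] show ?thesis unfolding m'_def by simp
  qed
qed



lemma Dg_polyfun: "(\<lambda>g. Dg g) \<in> polyfun"
  unfolding Dg_def by (intro polyfun_prod polyfun_coord)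

lemma psi_chi: "\<forall>v. g v \<noteq> 0 \<Longrightarrow> torus_act h t g W a = W a * chi (wv h t a) (g :: 'v::finite \<Rightarrow> 'k::field)"
  unfolding torus_act_def by (simp add: chi_wv mult_ac)

lemma pull_clear:
  fixes p :: "('a::finite \<Rightarrow> 'k::field) \<Rightarrow> 'k" and h t :: "'a \<Rightarrow> 'v::finite"
  assumes "p \<in> polyfun"
  shows "\<exists>e. \<forall>e'\<ge>e. \<exists>P\<in>polyfun. \<forall>g. (\<forall>v. g v \<noteq> 0) \<longrightarrow> p (torus_act h t g W) * Dg g ^ e' = P g"
  using assms
proof induction
  case (const c)
  show ?case
  proof (rule exI[of _ 0], intro allI impI)
    fix e' :: nat
    have "(\<lambda>g. c * Dg g ^ e') \<in> polyfun" by (intro polyfun_mult polyfun_const polyfun_power Dg_polyfun)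
    then show "\<exists>P\<in>polyfun. \<forall>g. (\<forall>v. g v \<noteq> 0) \<longrightarrow> (\<lambda>_. c) (torus_act h t g W) * Dg g ^ e' = P g" by auto
  qed
next
  case (coord a)
  show ?case
  proof (rule exI[of _ 1], intro allI impI)
    fix e' :: nat assume e': "1 \<le> e'"
    let ?P = "\<lambda>g. g (h a) * W a * (\<Prod>v\<in>UNIV-{t a}. g v) * Dg g ^ (e' - 1)"
    have "?P \<in> polyfun"
      by (intro polyfun_mult polyfun_coord polyfun_const polyfun_prod polyfun_power Dg_polyfun)
    moreover have "torus_act h t g W a * Dg g ^ e' = ?P g" if g: "\<forall>v. g v \<noteq> 0" for g
    proof -
      have "Dg g ^ e' = Dg g * Dg g ^ (e' - 1)" using e' by (cases e') auto
      moreover have "Dg g = g (t a) * (\<Prod>v\<in>UNIV-{t a}. g v)" unfolding Dg_def by (rule prod.remove) auto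
      ultimately have "Dg g ^ e' = g (t a) * (\<Prod>v\<in>UNIV-{t a}. g v) * Dg g ^ (e' - 1)" by simp
      then have "inverse (g (t a)) * Dg g ^ e' = (\<Prod>v\<in>UNIV-{t a}. g v) * Dg g ^ (e' - 1)"
        using g[rule_format, of "t a"] by (simp add: mult.assoc[symmetric])
      then show ?thesis unfolding torus_act_def by (simp add: mult.assoc)
    qed
    ultimately show "\<exists>P\<in>polyfun. \<forall>g. (\<forall>v. g v \<noteq> 0) \<longrightarrow> (\<lambda>x. x a) (torus_act h t g W) * Dg g ^ e' = P g"
      by auto
  qed
next
  case (add f1 f2)
  then obtain e1 e2 where E: "\<forall>e'\<ge>e1. \<exists>P\<in>polyfun. \<forall>g. (\<forall>v. g v \<noteq> 0) \<longrightarrow> f1 (torus_act h t g W) * Dg g ^ e' = P g"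
    "\<forall>e'\<ge>e2. \<exists>P\<in>polyfun. \<forall>g. (\<forall>v. g v \<noteq> 0) \<longrightarrow> f2 (torus_act h t g W) * Dg g ^ e' = P g" by blast
  show ?case
  proof (rule exI[of _ "max e1 e2"], intro allI impI)
    fix e' :: nat assume "max e1 e2 \<le> e'"
    then obtain P1 P2 where P: "P1 \<in> polyfun" "\<forall>g. (\<forall>v. g v \<noteq> 0) \<longrightarrow> f1 (torus_act h t g W) * Dg g ^ e' = P1 g"
      "P2 \<in> polyfun" "\<forall>g. (\<forall>v. g v \<noteq> 0) \<longrightarrow> f2 (torus_act h t g W) * Dg g ^ e' = P2 g"
      using E \<open>max e1 e2 \<le> e'\<close> by (metis max.bounded_iff)
    show "\<exists>P\<in>polyfun. \<forall>g. (\<forall>v. g v \<noteq> 0) \<longrightarrow> (f1 (torus_act h t g W) + f2 (torus_act h t g W)) * Dg g ^ e' = P g"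
      using P by (intro bexI[of _ "\<lambda>g. P1 g + P2 g"]) (auto simp: distrib_right intro: polyfun_add)
  qed
next
  case (mult f1 f2)
  then obtain e1 e2 where E: "\<forall>e'\<ge>e1. \<exists>P\<in>polyfun. \<forall>g. (\<forall>v. g v \<noteq> 0) \<longrightarrow> f1 (torus_act h t g W) * Dg g ^ e' = P g"
    "\<forall>e'\<ge>e2. \<exists>P\<in>polyfun. \<forall>g. (\<forall>v. g v \<noteq> 0) \<longrightarrow> f2 (torus_act h t g W) * Dg g ^ e' = P g" by blast
  show ?case
  proof (rule exI[of _ "e1 + e2"], intro allI impI)
    fix e' :: nat assume le: "e1 + e2 \<le> e'"
    obtain P1 where P1: "P1 \<in> polyfun" "\<forall>g. (\<forall>v. g v \<noteq> 0) \<longrightarrow> f1 (torus_act h t g W) * Dg g ^ e1 = P1 g"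
      using E(1) by blast
    obtain P2 where P2: "P2 \<in> polyfun" "\<forall>g. (\<forall>v. g v \<noteq> 0) \<longrightarrow> f2 (torus_act h t g W) * Dg g ^ (e' - e1) = P2 g"
      using E(2)[rule_format, of "e' - e1"] le by (metis add_le_imp_le_diff add.commute)
    have "Dg g ^ e' = Dg g ^ e1 * Dg g ^ (e' - e1)" for g :: "'v \<Rightarrow> 'k"
      using le by (simp add: power_add[symmetric])
    then show "\<exists>P\<in>polyfun. \<forall>g. (\<forall>v. g v \<noteq> 0) \<longrightarrow> (f1 (torus_act h t g W) * f2 (torus_act h t g W)) * Dg g ^ e' = P g"
      using P1 P2 by (intro bexI[of _ "\<lambda>g. P1 g * P2 g"]) (auto simp: mult_ac intro: polyfun_mult)
  qed
qed

lemma oneparam: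
  fixes p :: "('a::finite \<Rightarrow> 'k::field) \<Rightarrow> 'k" and h t :: "'a \<Rightarrow> 'v::finite"
  assumes "p \<in> polyfun" and mono: "\<forall>a. W a \<noteq> 0 \<longrightarrow> u (t a) \<le> u (h a)" and g: "\<forall>v. g v \<noteq> 0"
  shows "\<exists>L. \<forall>l. l \<noteq> 0 \<longrightarrow> p (torus_act h t (\<lambda>v. l powi u v * g v) W) = poly L l"
  using assms(1)
proof induction
  case (const c) show ?case by (rule exI[of _ "[:c:]"]) simp
next
  case (coord a)
  show ?case
  proof (cases "W a = 0")
    case True then show ?thesis by (intro exI[of _ 0]) (simp add: torus_act_def)
  next
    case False
    define n where "n = nat (u (h a) - u (t a))"
    have n: "int n = u (h a) - u (t a)" unfolding n_def using mono False by simp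
    show ?thesis
    proof (rule exI[of _ "monom (W a * chi (wv h t a) g) n"], intro allI impI)
      fix l :: 'k assume l: "l \<noteq> 0"
      have gl: "\<forall>v. l powi u v * g v \<noteq> 0" using l g by (simp add: power_int_not_zero)
      have "torus_act h t (\<lambda>v. l powi u v * g v) W a = W a * (l powi (u (h a) - u (t a)) * chi (wv h t a) g)"
      proof -
        have "torus_act h t (\<lambda>v. l powi u v * g v) W a = W a * chi (wv h t a) (\<lambda>v. l powi u v * g v)"
          by (rule psi_chi[OF gl])
        also have "chi (wv h t a) (\<lambda>v. l powi u v * g v) = l powi (\<Sum>v\<in>UNIV. u v * wv h t a v) * chi (wv h t a) g"
          by (rule chi_gl[OF l g])
        also have "(\<Sum>v\<in>UNIV. u v * wv h t a v) = u (h a) - u (t a)" by (rule sum_wv)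
        finally show ?thesis .
      qed
      also have "\<dots> = poly (monom (W a * chi (wv h t a) g) n) l"
        using n[symmetric] by (simp add: poly_monom)
      finally show "(\<lambda>x. x a) (torus_act h t (\<lambda>v. l powi u v * g v) W) = poly (monom (W a * chi (wv h t a) g) n) l"
        by simp
    qed
  qed
next
  case (add f1 f2) then obtain L1 L2 where "\<forall>l. l \<noteq> 0 \<longrightarrow> f1 (torus_act h t (\<lambda>v. l powi u v * g v) W) = poly L1 l"
      "\<forall>l. l \<noteq> 0 \<longrightarrow> f2 (torus_act h t (\<lambda>v. l powi u v * g v) W) = poly L2 l" by blast
  then show ?case by (intro exI[of _ "L1 + L2"]) simp
next
  case (mult f1 f2) then obtain L1 L2 where "\<forall>l. l \<noteq> 0 \<longrightarrow> f1 (torus_act h t (\<lambda>v. l powi u v * g v) W) = poly L1 l"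
      "\<forall>l. l \<noteq> 0 \<longrightarrow> f2 (torus_act h t (\<lambda>v. l powi u v * g v) W) = poly L2 l" by blast
  then show ?case by (intro exI[of _ "L1 * L2"]) simp
qed



lemma scale_rel:
  fixes q X :: "'k::comm_semiring_1"
  shows "(q*X)^n + (\<Sum>j<n. C j * (q*X)^j * q^(n-j)) = q^n * (X^n + (\<Sum>j<n. C j * X^j))"
proof -
  have "C j * (q*X)^j * q^(n-j) = q^n * (C j * X^j)" if "j < n" for j
  proof -
    have "C j * (q*X)^j * q^(n-j) = C j * X^j * (q^j * q^(n-j))" by (simp add: power_mult_distrib mult_ac)
    also have "q^j * q^(n-j) = q^n" using that by (simp add: power_add[symmetric])
    finally show ?thesis by (simp add: mult_ac)
  qed
  then have "(\<Sum>j<n. C j * (q*X)^j * q^(n-j)) = q^n * (\<Sum>j<n. C j * X^j)"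
    unfolding sum_distrib_left by (intro sum.cong) auto
  then show ?thesis by (simp add: power_mult_distrib distrib_left)
qed

lemma term_id:
  fixes c f g d :: "'k::comm_semiring_1"
  assumes "j < n"
  shows "(c * d * d^(n-j-1)) * (f*d*d)^j * (g*d)^(n-j) = c * f^j * g^(n-j) * d^(2*n)"
proof -
  have e1: "d * d^(n-j-1) = d^(n-j)" using assms by (metis Suc_diff_Suc diff_Suc_1 power_Suc diff_diff_left Suc_eq_plus1)
  have "(c * d * d^(n-j-1)) * (f*d*d)^j * (g*d)^(n-j) = c * f^j * g^(n-j) * (d^(n-j) * d^j * d^j * d^(n-j))"
    using e1 by (simp add: power_mult_distrib mult_ac)
  also have "d^(n-j) * d^j * d^j * d^(n-j) = d^(2*n)"
    using assms by (simp add: power_add[symmetric] mult_2)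
  finally show ?thesis .
qed

lemma mult4_swap: "(a*x)*(b*y) = (a*b)*((x::'k::comm_semiring_1)*y)" by (simp add: mult_ac)

lemma sub_closure: "x \<in> S \<Longrightarrow> x \<in> zariski_closure S"
  unfolding zariski_closure_def by auto

lemma closure_zero: "p \<in> polyfun \<Longrightarrow> (\<forall>s\<in>S. p s = 0) \<Longrightarrow> x \<in> zariski_closure S \<Longrightarrow> p x = 0"
  unfolding zariski_closure_def by auto

lemma orbit_mem: "\<forall>v. g v \<noteq> 0 \<Longrightarrow> torus_act h t g W \<in> torus_orbit h t W"
  unfolding torus_orbit_def by blast

lemma torus_zero_V:
  assumes "p \<in> polyfun" "\<forall>g. (\<forall>v. g v \<noteq> 0) \<longrightarrow> p (torus_act h t g W) = 0"
    "x \<in> zariski_closure (torus_orbit h t W)"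
  shows "p x = 0"
  using closure_zero[OF assms(1) _ assms(3)] assms(2) unfolding torus_orbit_def by blast

lemma orbit_in_V: "\<forall>v. g v \<noteq> 0 \<Longrightarrow> torus_act h t g W \<in> zariski_closure (torus_orbit h t W)"
  by (intro sub_closure orbit_mem)

lemma pull_clear1:
  fixes p :: "('a::finite \<Rightarrow> 'k::field) \<Rightarrow> 'k" and h t :: "'a \<Rightarrow> 'v::finite"
  assumes "p \<in> polyfun"
  obtains P e where "P \<in> polyfun" "\<forall>g. (\<forall>v. g v \<noteq> 0) \<longrightarrow> p (torus_act h t g W) * Dg g ^ e = P g"
  using pull_clear[OF assms, of h t W] by blast

lemma irreducible_V:
  fixes h t :: "'a::finite \<Rightarrow> 'v::finite" and W :: "'a \<Rightarrow> 'k::field_char_0"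
  shows "irreducible_variety (zariski_closure (torus_orbit h t W))"
  unfolding irreducible_variety_def
proof (intro conjI ballI impI)
  have "torus_act h t (\<lambda>_. 1) W = W" unfolding torus_act_def by simp
  then show "zariski_closure (torus_orbit h t W) \<noteq> {}" using orbit_in_V[of "\<lambda>_::'v. 1::'k" h t W] by auto
next
  fix p q :: "('a \<Rightarrow> 'k) \<Rightarrow> 'k" assume pq: "p \<in> polyfun" "q \<in> polyfun"
    and van: "\<forall>x\<in>zariski_closure (torus_orbit h t W). p x * q x = 0"
  obtain P ep where P: "P \<in> polyfun" "\<forall>g. (\<forall>v. g v \<noteq> 0) \<longrightarrow> p (torus_act h t g W) * Dg g ^ ep = P g"
    using pull_clear1[OF pq(1), of h t W] by blast
  obtain Q eq where Q: "Q \<in> polyfun" "\<forall>g. (\<forall>v. g v \<noteq> 0) \<longrightarrow> q (torus_act h t g W) * Dg g ^ eq = Q g"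
    using pull_clear1[OF pq(2), of h t W] by blast
  have "P g * Q g = 0" for g
  proof (rule polyfun_density[of "\<lambda>g. P g * Q g"])
    show "(\<lambda>g. P g * Q g) \<in> polyfun" using P Q by (intro polyfun_mult)
    fix g :: "'v \<Rightarrow> 'k" assume g: "\<forall>i. g i \<noteq> 0"
    have "p (torus_act h t g W) * q (torus_act h t g W) = 0" using van orbit_in_V[OF g] by blast
    then have "(p (torus_act h t g W) * Dg g ^ ep) * (q (torus_act h t g W) * Dg g ^ eq) = 0"
      by (subst mult4_swap) simp
    then show "P g * Q g = 0" using P(2) Q(2) g by simp
  qed
  then have "(\<forall>g. P g = 0) \<or> (\<forall>g. Q g = 0)" using polyfun_domain[OF P(1) Q(1)] by blast
  then show "(\<forall>x\<in>zariski_closure (torus_orbit h t W). p x = 0) \<or> (\<forall>x\<in>zariski_closure (torus_orbit h t W). q x = 0)"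
  proof
    assume "\<forall>g. P g = 0"
    then have "\<forall>g. (\<forall>v. g v \<noteq> 0) \<longrightarrow> p (torus_act h t g W) = 0"
    proof (intro allI impI)
      fix g :: "'v \<Rightarrow> 'k" assume g: "\<forall>v. g v \<noteq> 0"
      have "p (torus_act h t g W) * Dg g ^ ep = 0" using P(2) g \<open>\<forall>g. P g = 0\<close> by simp
      then show "p (torus_act h t g W) = 0" using Dg_nz[OF g] by simp
    qed
    then show ?thesis using torus_zero_V[OF pq(1)] by blast
  next
    assume "\<forall>g. Q g = 0"
    then have "\<forall>g. (\<forall>v. g v \<noteq> 0) \<longrightarrow> q (torus_act h t g W) = 0"
    proof (intro allI impI)
      fix g :: "'v \<Rightarrow> 'k" assume g: "\<forall>v. g v \<noteq> 0"
      have "q (torus_act h t g W) * Dg g ^ eq = 0" using Q(2) g \<open>\<forall>g. Q g = 0\<close> by simp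
      then show "q (torus_act h t g W) = 0" using Dg_nz[OF g] by simp
    qed
    then show ?thesis using torus_zero_V[OF pq(2)] by blast
  qed
qed



lemma valuation:
  fixes h t :: "'a::finite \<Rightarrow> 'v::finite" and W :: "'a \<Rightarrow> 'k::field_char_0"
    and f gg :: "('a \<Rightarrow> 'k) \<Rightarrow> 'k" and cc :: "nat \<Rightarrow> ('a \<Rightarrow> 'k) \<Rightarrow> 'k"
    and S :: "('v \<Rightarrow> nat) set" and c :: "('v \<Rightarrow> nat) \<Rightarrow> 'k" and u :: "'v \<Rightarrow> int"
  assumes gp: "gg \<in> polyfun" and cp: "\<forall>j<n. cc j \<in> polyfun" and n: "n > 0"
    and finS: "finite S" and cnz: "\<forall>m\<in>S. c m \<noteq> 0"
    and rel: "\<forall>g. (\<forall>v. g v \<noteq> 0) \<longrightarrow> f (torus_act h t g W) ^ n + (\<Sum>j<n. cc j (torus_act h t g W) * f (torus_act h t g W)^j * gg (torus_act h t g W)^(n-j)) = 0"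
    and lam: "\<forall>g. (\<forall>v. g v \<noteq> 0) \<longrightarrow> f (torus_act h t g W) = (\<Sum>m\<in>S. c m * chi (\<lambda>v. int (m v) - int E) g) * gg (torus_act h t g W)"
    and Gnz: "\<exists>g. (\<forall>v. g v \<noteq> 0) \<and> gg (torus_act h t g W) \<noteq> 0"
    and mono: "\<forall>a. W a \<noteq> 0 \<longrightarrow> u (t a) \<le> u (h a)"
  shows "\<forall>m\<in>S. 0 \<le> (\<Sum>v\<in>UNIV. u v * (int (m v) - int E))"
proof (rule ccontr)
  define sv where "sv m = (\<Sum>v\<in>UNIV. u v * (int (m v) - int E))" for m :: "'v \<Rightarrow> nat"
  define m' where "m' m = (\<lambda>v. int (m v) - int E)" for m :: "'v \<Rightarrow> nat"
  define Lam where "Lam g = (\<Sum>m\<in>S. c m * chi (m' m) g)" for g :: "'v \<Rightarrow> 'k"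
  assume "\<not> ?thesis"
  then obtain m0 where m0: "m0 \<in> S" "sv m0 < 0" unfolding sv_def by force
  define \<sigma> where "\<sigma> = Min (sv ` S)"
  have \<sigma>le: "\<sigma> \<le> sv m" if "m \<in> S" for m unfolding \<sigma>_def using finS that by simp
  have \<sigma>in: "\<sigma> \<in> sv ` S" unfolding \<sigma>_def using finS m0(1) by (intro Min_in) auto
  have \<sigma>neg: "\<sigma> < 0" using \<sigma>le[OF m0(1)] m0(2) by simp
  define S0 where "S0 = {m\<in>S. sv m = \<sigma>}"
  have S0ne: "S0 \<noteq> {}" using \<sigma>in unfolding S0_def by auto
  have finS0: "finite S0" using finS unfolding S0_def by simp
  define sn where "sn = nat (- \<sigma>)"
  have sn: "int sn = - \<sigma>" "sn \<ge> 1" using \<sigma>neg unfolding sn_def by auto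
  have claimA: "(\<Sum>m\<in>S0. c m * chi (m' m) g) = 0" if g: "\<forall>v. g v \<noteq> 0" and Gg: "gg (torus_act h t g W) \<noteq> 0" for g
  proof -
    define gl where "gl l = (\<lambda>v. l powi u v * g v)" for l :: 'k
    have glT: "\<forall>v. gl l v \<noteq> 0" if "l \<noteq> 0" for l unfolding gl_def using g that by (simp add: power_int_not_zero)
    have gl1: "gl 1 = g" unfolding gl_def by simp
    obtain GL where GL: "\<forall>l. l \<noteq> 0 \<longrightarrow> gg (torus_act h t (gl l) W) = poly GL l"
      using oneparam[OF gp mono g] unfolding gl_def by blast
    have "\<forall>j. \<exists>L. j < n \<longrightarrow> (\<forall>l. l \<noteq> 0 \<longrightarrow> cc j (torus_act h t (gl l) W) = poly L l)"
    proof
      fix j show "\<exists>L. j < n \<longrightarrow> (\<forall>l. l \<noteq> 0 \<longrightarrow> cc j (torus_act h t (gl l) W) = poly L l)"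
      proof (cases "j < n")
        case True
        then have "cc j \<in> polyfun" using cp by simp
        from oneparam[OF this mono g] show ?thesis unfolding gl_def by blast
      qed simp
    qed
    from choice[OF this] obtain CL where CL0: "\<forall>j. j < n \<longrightarrow> (\<forall>l. l \<noteq> 0 \<longrightarrow> cc j (torus_act h t (gl l) W) = poly (CL j) l)"
      by blast
    have CL: "cc j (torus_act h t (gl l) W) = poly (CL j) l" if "j < n" "l \<noteq> 0" for j l using CL0 that by blast
    define b where "b m = c m * chi (m' m) g" for m
    define K where "K = (\<Sum>m\<in>S. monom (b m) (nat (sv m + int sn)))"
    have polyK: "poly K l = l ^ sn * Lam (gl l)" if l: "l \<noteq> 0" for l
    proof -
      have "l ^ sn * Lam (gl l) = (\<Sum>m\<in>S. c m * chi (m' m) (gl l) * l ^ sn)"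
        unfolding Lam_def by (simp add: sum_distrib_left mult_ac)
      also have "\<dots> = (\<Sum>m\<in>S. b m * l ^ nat (sv m + int sn))"
      proof (rule sum.cong[OF refl])
        fix m assume mS: "m \<in> S"
        have "chi (m' m) (gl l) = l powi sv m * chi (m' m) g"
          unfolding gl_def sv_def m'_def by (rule chi_gl[OF l g])
        moreover have "l powi sv m * l ^ sn = l ^ nat (sv m + int sn)"
        proof -
          have nn: "sv m + int sn \<ge> 0" using \<sigma>le[OF mS] sn by simp
          have "l powi sv m * l ^ sn = l powi sv m * l powi (int sn)" by simp
          also have "\<dots> = l powi (sv m + int sn)" using l by (simp add: power_int_add)
          also have "\<dots> = l powi (int (nat (sv m + int sn)))" using nn by simp
          also have "\<dots> = l ^ nat (sv m + int sn)" by (rule power_int_of_nat)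
          finally show ?thesis .
        qed
        ultimately show "c m * chi (m' m) (gl l) * l ^ sn = b m * l ^ nat (sv m + int sn)"
          unfolding b_def by (simp add: mult_ac)
      qed
      also have "\<dots> = poly K l" unfolding K_def by (simp add: poly_sum poly_monom)
      finally show ?thesis by simp
    qed
    have polyK0: "poly K 0 = (\<Sum>m\<in>S0. b m)"
    proof -
      have "poly K 0 = (\<Sum>m\<in>S. if nat (sv m + int sn) = 0 then b m else 0)"
        unfolding K_def poly_0_coeff_0 coeff_sum coeff_monom by (intro sum.cong refl)
      also have "\<dots> = (\<Sum>m\<in>S. if m \<in> S0 then b m else 0)"
      proof (rule sum.cong[OF refl])
        fix m assume mS: "m \<in> S"
        have "nat (sv m + int sn) = 0 \<longleftrightarrow> m \<in> S0" unfolding S0_def using \<sigma>le[OF mS] sn mS by auto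
        then show "(if nat (sv m + int sn) = 0 then b m else 0) = (if m \<in> S0 then b m else 0)" by simp
      qed
      also have "\<dots> = (\<Sum>m\<in>S0. b m)" using finS unfolding S0_def by (simp add: sum.inter_filter)
      finally show ?thesis .
    qed
    have GL0: "GL \<noteq> 0" using GL[rule_format, of 1] gl1 Gg by auto
    define Z where "Z = K^n + (\<Sum>j<n. CL j * K^j * (monom 1 sn)^(n-j))"
    have "Z = 0"
    proof (rule poly_zero_on_infinite[of "UNIV - ({0} \<union> {l. poly GL l = 0})"])
      have "finite ({0} \<union> {l. poly GL l = 0})" using poly_roots_finite[OF GL0] by simp
      then show "infinite (UNIV - ({0::'k} \<union> {l. poly GL l = 0}))"
        using infinite_UNIV_char_0 Diff_infinite_finite by blast
      fix l assume "l \<in> UNIV - ({0} \<union> {l. poly GL l = 0})"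
      then have l: "l \<noteq> 0" and Gl: "poly GL l \<noteq> 0" by auto
      define X where "X = Lam (gl l)"
      define G where "G = gg (torus_act h t (gl l) W)"
      define C where "C j = cc j (torus_act h t (gl l) W)" for j
      have G0: "G \<noteq> 0" unfolding G_def using GL l Gl by simp
      have fX: "f (torus_act h t (gl l) W) = G * X"
        using lam glT[OF l] unfolding G_def X_def Lam_def m'_def by (simp add: mult.commute)
      have "G^n * (X^n + (\<Sum>j<n. C j * X^j)) = (G*X)^n + (\<Sum>j<n. C j * (G*X)^j * G^(n-j))"
        by (rule scale_rel[symmetric])
      also have "\<dots> = 0"
      proof -
        have "f (torus_act h t (gl l) W) ^ n + (\<Sum>j<n. cc j (torus_act h t (gl l) W) * f (torus_act h t (gl l) W)^j * gg (torus_act h t (gl l) W)^(n-j)) = 0"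
          using rel glT[OF l] by blast
        then show ?thesis unfolding fX C_def G_def .
      qed
      finally have relX: "X^n + (\<Sum>j<n. C j * X^j) = 0" using G0 by simp
      have "poly Z l = (l^sn * X)^n + (\<Sum>j<n. C j * (l^sn * X)^j * (l^sn)^(n-j))"
        unfolding Z_def X_def C_def
        by (simp add: poly_sum polyK[OF l] poly_monom) (intro sum.cong refl, simp add: CL l)
      also have "\<dots> = (l^sn)^n * (X^n + (\<Sum>j<n. C j * X^j))" by (rule scale_rel)
      also have "\<dots> = 0" using relX by simp
      finally show "poly Z l = 0" .
    qed
    then have "poly Z 0 = 0" by simp
    moreover have "poly Z 0 = poly K 0 ^ n"
    proof -
      have "poly (monom (1::'k) sn) 0 = 0" using sn(2) by (simp add: poly_monom)
      then have "poly ((monom (1::'k) sn)^(n-j)) 0 = 0" if "j < n" for j using that by (simp add: poly_power)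
      then have "poly (\<Sum>j<n. CL j * K^j * (monom 1 sn)^(n-j)) 0 = 0"
        by (simp add: poly_sum del: poly_power)
      then show ?thesis unfolding Z_def by simp
    qed
    ultimately have "poly K 0 = 0" using n by simp
    then show ?thesis using polyK0 unfolding b_def by simp
  qed
  define Z0 where "Z0 g = (\<Sum>m\<in>S0. c m * mono m g)" for g :: "'v \<Rightarrow> 'k"
  have Z0p: "Z0 \<in> polyfun" unfolding Z0_def[abs_def] using finS0 by (rule rep_polyfun)
  obtain Gt e where Gt: "Gt \<in> polyfun" "\<forall>g. (\<forall>v. g v \<noteq> 0) \<longrightarrow> gg (torus_act h t g W) * Dg g ^ e = Gt g"
    using pull_clear1[OF gp, of h t W] by blast
  have Z0chi: "Z0 g = Dg g ^ E * (\<Sum>m\<in>S0. c m * chi (m' m) g)" if g: "\<forall>v. g v \<noteq> 0" for g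
    unfolding Z0_def sum_distrib_left
  proof (intro sum.cong refl)
    fix m show "c m * mono m g = Dg g ^ E * (c m * chi (m' m) g)"
      using chi_shift[OF g, of m E] unfolding m'_def by (simp add: mult_ac)
  qed
  have "Z0 g * Gt g = 0" for g
  proof (rule polyfun_density[of "\<lambda>g. Z0 g * Gt g"])
    show "(\<lambda>g. Z0 g * Gt g) \<in> polyfun" using Z0p Gt(1) by (intro polyfun_mult)
    fix g :: "'v \<Rightarrow> 'k" assume g: "\<forall>i. g i \<noteq> 0"
    show "Z0 g * Gt g = 0"
    proof (cases "gg (torus_act h t g W) = 0")
      case True
      have "Gt g = gg (torus_act h t g W) * Dg g ^ e" using Gt(2) g by simp
      then show ?thesis using True by simp
    next
      case False then show ?thesis using Z0chi[OF g] claimA[OF g False] by simp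
    qed
  qed
  then have "(\<forall>g. Z0 g = 0) \<or> (\<forall>g. Gt g = 0)" using polyfun_domain[OF Z0p Gt(1)] by blast
  moreover have "\<not> (\<forall>g. Gt g = 0)"
  proof
    assume "\<forall>g. Gt g = 0"
    obtain g where g: "\<forall>v. g v \<noteq> 0" "gg (torus_act h t g W) \<noteq> 0" using Gnz by blast
    have "gg (torus_act h t g W) * Dg g ^ e = Gt g" using Gt(2) g(1) by blast
    then have "gg (torus_act h t g W) * Dg g ^ e = 0" using \<open>\<forall>g. Gt g = 0\<close> by simp
    then show False using g Dg_nz[OF g(1)] by simp
  qed
  ultimately have "\<forall>g. Z0 g = 0" by blast
  then have "\<forall>m\<in>S0. c m = 0" using identity_torus[OF finS0, of c] unfolding Z0_def by blast
  then show False using S0ne cnz unfolding S0_def by auto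
qed



lemma chi_inM:
  fixes h t :: "'a::finite \<Rightarrow> 'v::finite" and W :: "'a \<Rightarrow> 'k::field"
  assumes g: "\<forall>v. g v \<noteq> 0" and N0: "\<forall>a. a \<notin> {a. W a \<noteq> 0} \<longrightarrow> N a = 0"
    and mm: "\<forall>v. mm v = (\<Sum>a\<in>UNIV. int (N a) * wv h t a v)"
  shows "(\<Prod>a\<in>UNIV. (torus_act h t g W a * inverse (W a)) ^ N a) = chi mm g"
proof -
  have "mm = (\<Sum>a\<in>UNIV. (\<lambda>v. int (N a) * wv h t a v))" using mm by (simp add: fun_eq_iff fun_sum_apply)
  then have "chi mm g = (\<Prod>a\<in>UNIV. chi (\<lambda>v. int (N a) * wv h t a v) g)" using chi_sum[OF g] by simp
  also have "\<dots> = (\<Prod>a\<in>UNIV. chi (wv h t a) g ^ N a)" by (simp add: chi_scale)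
  also have "\<dots> = (\<Prod>a\<in>UNIV. (torus_act h t g W a * inverse (W a)) ^ N a)"
  proof (rule prod.cong[OF refl])
    fix a
    show "chi (wv h t a) g ^ N a = (torus_act h t g W a * inverse (W a)) ^ N a"
    proof (cases "W a = 0")
      case True then show ?thesis using N0 by simp
    next
      case False
      have "torus_act h t g W a * inverse (W a) = chi (wv h t a) g * (W a * inverse (W a))"
        using psi_chi[OF g, of h t W a] by (simp add: mult_ac)
      then show ?thesis using False by simp
    qed
  qed
  finally show ?thesis by simp
qed

lemma normal_part:
  fixes h t :: "'a::finite \<Rightarrow> 'v::finite" and W :: "'a \<Rightarrow> 'k::field_char_0"
    and f gg :: "('a \<Rightarrow> 'k) \<Rightarrow> 'k" and cc :: "nat \<Rightarrow> ('a \<Rightarrow> 'k) \<Rightarrow> 'k"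
  assumes ac: "alg_closed TYPE('k)"
    and fp: "f \<in> polyfun" and gp: "gg \<in> polyfun"
    and gnzV: "\<exists>x\<in>zariski_closure (torus_orbit h t W). gg x \<noteq> 0"
    and n: "n > 0" and cp: "\<forall>j<n. cc j \<in> polyfun"
    and relV: "\<forall>x\<in>zariski_closure (torus_orbit h t W). f x ^ n + (\<Sum>j<n. cc j x * f x ^ j * gg x ^ (n - j)) = 0"
  shows "\<exists>r\<in>polyfun. \<forall>x\<in>zariski_closure (torus_orbit h t W). f x = r x * gg x"
proof -
  let ?V = "zariski_closure (torus_orbit h t W)"
  let ?T = "\<lambda>g::'v \<Rightarrow> 'k. \<forall>v. g v \<noteq> 0"
  have relT: "f (torus_act h t g W) ^ n + (\<Sum>j<n. cc j (torus_act h t g W) * f (torus_act h t g W) ^ j * gg (torus_act h t g W) ^ (n - j)) = 0"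
    if "?T g" for g using relV orbit_in_V[OF that] by blast
  obtain ef where ef: "\<forall>e'\<ge>ef. \<exists>P\<in>polyfun. \<forall>g. ?T g \<longrightarrow> f (torus_act h t g W) * Dg g ^ e' = P g"
    using pull_clear[OF fp, of h t W] by blast
  obtain eg where eg: "\<forall>e'\<ge>eg. \<exists>P\<in>polyfun. \<forall>g. ?T g \<longrightarrow> gg (torus_act h t g W) * Dg g ^ e' = P g"
    using pull_clear[OF gp, of h t W] by blast
  have "\<forall>j. \<exists>e. j < n \<longrightarrow> (\<forall>e'\<ge>e. \<exists>P\<in>polyfun. \<forall>g. ?T g \<longrightarrow> cc j (torus_act h t g W) * Dg g ^ e' = P g)"
  proof
    fix j show "\<exists>e. j < n \<longrightarrow> (\<forall>e'\<ge>e. \<exists>P\<in>polyfun. \<forall>g. ?T g \<longrightarrow> cc j (torus_act h t g W) * Dg g ^ e' = P g)"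
    proof (cases "j < n")
      case True then have "cc j \<in> polyfun" using cp by simp
      from pull_clear[OF this, of h t W] show ?thesis by blast
    qed simp
  qed
  from choice[OF this] obtain ec where ec: "\<forall>j. j < n \<longrightarrow> (\<forall>e'\<ge>ec j. \<exists>P\<in>polyfun. \<forall>g. ?T g \<longrightarrow> cc j (torus_act h t g W) * Dg g ^ e' = P g)"
    by blast
  define E where "E = max ef (max eg (Max (insert 0 (ec ` {..<n}))))"
  have Eec: "ec j \<le> E" if "j < n" for j
  proof -
    have "ec j \<le> Max (insert 0 (ec ` {..<n}))" using that by (intro Max_ge) auto
    then show ?thesis unfolding E_def by simp
  qed
  obtain Ft where Ft: "Ft \<in> polyfun" "\<forall>g. ?T g \<longrightarrow> f (torus_act h t g W) * Dg g ^ E = Ft g"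
    using ef unfolding E_def by (meson max.cobounded1)
  obtain Gt where Gt: "Gt \<in> polyfun" "\<forall>g. ?T g \<longrightarrow> gg (torus_act h t g W) * Dg g ^ E = Gt g"
    using eg unfolding E_def by (meson max.cobounded1 max.coboundedI2)
  have "\<forall>j. \<exists>P. j < n \<longrightarrow> P \<in> polyfun \<and> (\<forall>g. ?T g \<longrightarrow> cc j (torus_act h t g W) * Dg g ^ E = P g)"
  proof
    fix j show "\<exists>P. j < n \<longrightarrow> P \<in> polyfun \<and> (\<forall>g. ?T g \<longrightarrow> cc j (torus_act h t g W) * Dg g ^ E = P g)"
    proof (cases "j < n")
      case True
      then have "\<exists>P\<in>polyfun. \<forall>g. ?T g \<longrightarrow> cc j (torus_act h t g W) * Dg g ^ E = P g"
        using ec Eec by blast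
      then show ?thesis by blast
    qed simp
  qed
  from choice[OF this] obtain Ct where Ct: "\<forall>j. j < n \<longrightarrow> Ct j \<in> polyfun \<and> (\<forall>g. ?T g \<longrightarrow> cc j (torus_act h t g W) * Dg g ^ E = Ct j g)"
    by blast
  define De where "De g = Dg g ^ E" for g :: "'v \<Rightarrow> 'k"
  have Dep: "De \<in> polyfun" unfolding De_def[abs_def] by (intro polyfun_power Dg_polyfun)
  have Denz: "De g \<noteq> 0" if "?T g" for g unfolding De_def using Dg_nz[OF that] by simp
  define P1 where "P1 g = Ft g * De g" for g
  define Q where "Q j g = Ct j g * De g ^ (n - j - 1)" for j g
  have P1p: "P1 \<in> polyfun" unfolding P1_def[abs_def] using Ft(1) Dep by (intro polyfun_mult)
  have Qp: "\<forall>j<n. Q j \<in> polyfun" unfolding Q_def[abs_def] using Ct Dep by (auto intro!: polyfun_mult polyfun_power)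
  have relP: "P1 g ^ n + (\<Sum>j<n. Q j g * P1 g ^ j * Gt g ^ (n - j)) = 0" for g
  proof (rule polyfun_density[of "\<lambda>g. P1 g ^ n + (\<Sum>j<n. Q j g * P1 g ^ j * Gt g ^ (n - j))"])
    show "(\<lambda>g. P1 g ^ n + (\<Sum>j<n. Q j g * P1 g ^ j * Gt g ^ (n - j))) \<in> polyfun"
      using P1p Qp Gt(1) by (intro polyfun_add polyfun_power polyfun_sum polyfun_mult) auto
    fix g :: "'v \<Rightarrow> 'k" assume g: "\<forall>i. g i \<noteq> 0"
    define F where "F = f (torus_act h t g W)"
    define G where "G = gg (torus_act h t g W)"
    define C where "C j = cc j (torus_act h t g W)" for j
    have P1g: "P1 g = F * De g * De g" unfolding P1_def F_def De_def using Ft(2) g by simp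
    have Gtg: "Gt g = G * De g" unfolding G_def De_def using Gt(2) g by simp
    have Qg: "Q j g = C j * De g * De g ^ (n - j - 1)" if "j < n" for j
      unfolding Q_def C_def De_def using Ct that g by simp
    have "P1 g ^ n + (\<Sum>j<n. Q j g * P1 g ^ j * Gt g ^ (n - j))
        = F ^ n * De g ^ (2 * n) + (\<Sum>j<n. C j * F ^ j * G ^ (n - j) * De g ^ (2 * n))"
    proof -
      have "P1 g ^ n = F ^ n * De g ^ (2 * n)" unfolding P1g
        by (simp add: power_mult_distrib power_add[symmetric] mult_2 mult.assoc)
      moreover have "(\<Sum>j<n. Q j g * P1 g ^ j * Gt g ^ (n - j)) = (\<Sum>j<n. C j * F ^ j * G ^ (n - j) * De g ^ (2 * n))"
      proof (rule sum.cong[OF refl])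
        fix j assume "j \<in> {..<n}"
        then have j: "j < n" by simp
        show "Q j g * P1 g ^ j * Gt g ^ (n - j) = C j * F ^ j * G ^ (n - j) * De g ^ (2 * n)"
          unfolding Qg[OF j] P1g Gtg by (rule term_id[OF j])
      qed
      ultimately show ?thesis by simp
    qed
    also have "\<dots> = De g ^ (2 * n) * (F ^ n + (\<Sum>j<n. C j * F ^ j * G ^ (n - j)))"
      by (simp add: algebra_simps sum_distrib_left)
    also have "\<dots> = 0" using relT[OF g] unfolding F_def G_def C_def by simp
    finally show "P1 g ^ n + (\<Sum>j<n. Q j g * P1 g ^ j * Gt g ^ (n - j)) = 0" .
  qed
  have Gnz: "\<exists>g. ?T g \<and> gg (torus_act h t g W) \<noteq> 0"
  proof (rule ccontr)
    assume "\<not> ?thesis"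
    then have "\<forall>g. ?T g \<longrightarrow> gg (torus_act h t g W) = 0" by blast
    then have "\<forall>x\<in>?V. gg x = 0" using torus_zero_V[OF gp] by blast
    then show False using gnzV by blast
  qed
  then obtain g0 where g0: "?T g0" "gg (torus_act h t g0 W) \<noteq> 0" by blast
  have "Gt g0 = gg (torus_act h t g0 W) * Dg g0 ^ E" using Gt(2) g0(1) by (elim allE[of _ g0]) simp
  then have "Gt g0 \<noteq> 0" using g0(2) Dg_nz[OF g0(1)] by simp
  then have ex: "\<exists>x. Gt x \<noteq> 0" by blast
  have relP': "\<forall>x. P1 x ^ n + (\<Sum>j<n. Q j x * P1 x ^ j * Gt x ^ (n - j)) = 0" by (intro allI) (rule relP)
  from poly_normal[OF ac P1p Gt(1) ex Qp relP'] obtain H where Hp: "H \<in> polyfun" and H: "\<forall>x. P1 x = H x * Gt x"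
    by blast
  obtain S c where finS: "finite S" and repS: "\<forall>x. H x = (\<Sum>m\<in>S. c m * mono m x)"
    using polyfun_rep[OF Hp] by blast
  define S' where "S' = {m\<in>S. c m \<noteq> 0}"
  have finS': "finite S'" using finS unfolding S'_def by simp
  have cnz: "\<forall>m\<in>S'. c m \<noteq> 0" unfolding S'_def by simp
  have repS': "H x = (\<Sum>m\<in>S'. c m * mono m x)" for x
  proof -
    have "(\<Sum>m\<in>S'. c m * mono m x) = (\<Sum>m\<in>S. if c m \<noteq> 0 then c m * mono m x else 0)"
      unfolding S'_def using finS by (simp add: sum.inter_filter)
    also have "\<dots> = (\<Sum>m\<in>S. c m * mono m x)" by (intro sum.cong) auto
    finally show ?thesis using repS by simp
  qed
  define m' where "m' m = (\<lambda>v. int (m v) - int E)" for m :: "'v \<Rightarrow> nat"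
  define Lam where "Lam g = (\<Sum>m\<in>S'. c m * chi (m' m) g)" for g
  have HLam: "H g = De g * Lam g" if g: "?T g" for g
    unfolding repS' Lam_def sum_distrib_left
  proof (intro sum.cong refl)
    fix m show "c m * mono m g = De g * (c m * chi (m' m) g)"
      using chi_shift[OF g, of m E] unfolding m'_def De_def by (simp add: mult_ac)
  qed
  have lam: "f (torus_act h t g W) = Lam g * gg (torus_act h t g W)" if g: "?T g" for g
  proof -
    have "f (torus_act h t g W) * De g * De g = H g * (gg (torus_act h t g W) * De g)"
      using H[rule_format, of g] Ft(2) Gt(2) g unfolding P1_def De_def by simp
    also have "\<dots> = (Lam g * gg (torus_act h t g W)) * De g * De g" using HLam[OF g] by (simp add: mult_ac)
    finally show ?thesis using Denz[OF g] by simp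
  qed
  have val: "\<forall>m\<in>S'. 0 \<le> (\<Sum>v\<in>UNIV. u v * (int (m v) - int E))"
    if mono: "\<forall>a. W a \<noteq> 0 \<longrightarrow> u (t a) \<le> u (h a)" for u
    by (rule valuation[OF gp cp n finS' cnz _ _ Gnz mono, of f])
       (use relT lam in \<open>auto simp: Lam_def m'_def\<close>)
  have inMm: "inM {a. W a \<noteq> 0} h t (m' m)" if mS: "m \<in> S'" for m
  proof (rule flow_decomp)
    have "0 \<le> (\<Sum>v\<in>UNIV. (\<lambda>_. 1::int) v * (int (m v) - int E))" using val[of "\<lambda>_. 1"] mS by auto
    moreover have "0 \<le> (\<Sum>v\<in>UNIV. (\<lambda>_. -1::int) v * (int (m v) - int E))" using val[of "\<lambda>_. -1"] mS by auto
    moreover have "(\<Sum>v\<in>UNIV. (\<lambda>_. -1::int) v * (int (m v) - int E)) = (-1) * (\<Sum>v\<in>UNIV. (int (m v) - int E))"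
      by (simp only: sum_distrib_left)
    moreover have "(\<Sum>v\<in>UNIV. (\<lambda>_. 1::int) v * (int (m v) - int E)) = (\<Sum>v\<in>UNIV. (int (m v) - int E))"
      by simp
    ultimately show "sum (m' m) UNIV = 0" unfolding m'_def by linarith
    show "\<forall>U. closedU {a. W a \<noteq> 0} h t U \<longrightarrow> 0 \<le> sum (m' m) U"
    proof (intro allI impI)
      fix U assume cU: "closedU {a. W a \<noteq> 0} h t U"
      define u where "u v = (if v \<in> U then 1 else 0::int)" for v
      have "\<forall>a. W a \<noteq> 0 \<longrightarrow> u (t a) \<le> u (h a)" using cU unfolding closedU_def u_def by auto
      then have "0 \<le> (\<Sum>v\<in>UNIV. u v * (int (m v) - int E))" using val mS by blast
      also have "(\<Sum>v\<in>UNIV. u v * (int (m v) - int E)) = (\<Sum>v\<in>UNIV. if v \<in> U then m' m v else 0)"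
        unfolding u_def m'_def by (intro sum.cong) auto
      also have "\<dots> = sum (m' m) U" by (simp add: sum.If_cases)
      finally show "0 \<le> sum (m' m) U" .
    qed
  qed
  have "\<forall>m. \<exists>N. m \<in> S' \<longrightarrow> (\<forall>a. a \<notin> {a. W a \<noteq> 0} \<longrightarrow> N a = 0) \<and> (\<forall>v. m' m v = (\<Sum>a\<in>UNIV. int (N a) * wv h t a v))"
    using inMm unfolding inM_def by blast
  from choice[OF this] obtain N where N: "\<forall>m. m \<in> S' \<longrightarrow> (\<forall>a. a \<notin> {a. W a \<noteq> 0} \<longrightarrow> N m a = 0) \<and> (\<forall>v. m' m v = (\<Sum>a\<in>UNIV. int (N m a) * wv h t a v))"
    by blast
  define r where "r x = (\<Sum>m\<in>S'. c m * (\<Prod>a\<in>UNIV. (x a * inverse (W a)) ^ N m a))" for x :: "'a \<Rightarrow> 'k"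
  have rp: "r \<in> polyfun" unfolding r_def[abs_def]
    by (intro polyfun_sum polyfun_mult polyfun_const polyfun_prod polyfun_power polyfun_coord)
  have rLam: "r (torus_act h t g W) = Lam g" if g: "?T g" for g
    unfolding r_def Lam_def
  proof (intro sum.cong refl)
    fix m assume "m \<in> S'"
    then show "c m * (\<Prod>a\<in>UNIV. (torus_act h t g W a * inverse (W a)) ^ N m a) = c m * chi (m' m) g"
      using chi_inM[OF g, of W "N m" "m' m" h t] N by simp
  qed
  have "\<forall>x\<in>?V. f x - r x * gg x = 0"
  proof (intro ballI)
    fix x assume "x \<in> ?V"
    show "f x - r x * gg x = 0"
    proof (rule torus_zero_V[of "\<lambda>x. f x - r x * gg x"])
      show "(\<lambda>x. f x - r x * gg x) \<in> polyfun" using fp rp gp by (intro polyfun_diff polyfun_mult)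
      show "\<forall>g. ?T g \<longrightarrow> f (torus_act h t g W) - r (torus_act h t g W) * gg (torus_act h t g W) = 0"
        using lam rLam by simp
    qed fact
  qed
  then show ?thesis using rp by auto
qed



theorem mainTheorem15:
  fixes h t :: "'a::finite \<Rightarrow> 'v::finite"
    and W :: "'a \<Rightarrow> 'k::field_char_0"
  assumes "alg_closed TYPE('k)"
    and "\<not> has_oriented_cycle h t"
  shows "normal_variety (zariski_closure (torus_orbit h t W))"
  unfolding normal_variety_def
proof (intro conjI irreducible_V ballI impI allI)
  fix f g :: "('a \<Rightarrow> 'k) \<Rightarrow> 'k" and n :: nat and c :: "nat \<Rightarrow> ('a \<Rightarrow> 'k) \<Rightarrow> 'k"
  assume "f \<in> polyfun" "g \<in> polyfun" "\<exists>x\<in>zariski_closure (torus_orbit h t W). g x \<noteq> 0"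
    "0 < n" "\<forall>j<n. c j \<in> polyfun"
    "\<forall>x\<in>zariski_closure (torus_orbit h t W). f x ^ n + (\<Sum>j<n. c j x * f x ^ j * g x ^ (n - j)) = 0"
  then show "\<exists>r\<in>polyfun. \<forall>x\<in>zariski_closure (torus_orbit h t W). f x = r x * g x"
    using normal_part[OF assms(1)] by blast
qed


end
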